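(* Let $0\le r\le n$ and $0\le s\le\min(r,n-r)$, and let $\lambda$ be the kernel of $\Lambda_s^{r,s}$ (so $\lambda$ is a function on $\{0,1,\dots,s\}$). Then for $0\le k\le s$, $$\lambda(k)=(-1)^k\frac{(r-s+1)_k}{[n-r]_k}\,\lambda(0).$$
   Context: Let $\Omega$ be a finite set with $|\Omega|=n\ge1$, $G=S(\Omega)$, $X=\mathcal P(\Omega)$, $X_r=\{x\in X:|x|=r\}$, with $G$ acting on $L^2(X)$ (complex functions on $X$; $L^2(X_r)$ = functions supported on $X_r$) by $(\rho(g)\psi)(x)=\psi(g^{-1}x)$. For $0\le s\le\min(r,n-r)$, $L^2(X_r)_s$ denotes the unique irreducible $G$-subspace of $L^2(X_r)$ isomorphic to the irreducible representation of $G$ associated with the partition $(n-s,s)$ ($L^2(X_r)$ is multiplicity free and contains exactly these). For $0\le r_1,r_2\le n$, $0\le s\le\min(r_1,n-r_1,r_2,n-r_2)$, $\Lambda_s^{r_1,r_2}$ is a nonzero $G$-equivariant map $L^2(X)\to L^2(X)$ sending $L^2(X_{r_1})_s$ into $L^2(X_{r_2})_s$ and vanishing on its orthogonal complement. Its kernel is the function $\lambda$ on integers $k$ with $\max(0,r_2-r_1)\le k\le\min(n-r_1,r_2)$ such that $(\Lambda_s^{r_1,r_2}\psi)(x_2)=\sum_{x_1\in X_{r_1}}\lambda(|x_2\setminus x_1|)\psi(x_1)$ for $\psi\in L^2(X_{r_1})$, $x_2\in X_{r_2}$. Notation: $[\alpha]_k=\alpha(\alpha-1)\cdots(\alpha-k+1)$,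 $(\alpha)_k=\alpha(\alpha+1)\cdots(\alpha+k-1)$, with $[\alpha]_0=(\alpha)_0=1$. *)

theory Defs
  imports Complex_Main "HOL-Combinatorics.Permutations"
begin

type_synonym 'a fn = "'a set \<Rightarrow> complex"

text \<open>Falling factorial [a]_k = a(a-1)...(a-k+1); rising factorial is the library pochhammer.\<close>
definition falling :: "complex \<Rightarrow> nat \<Rightarrow> complex" where
  "falling a k = (\<Prod>i<k. a - of_nat i)"

text \<open>L^2(X): complex functions on X = Pow Omega (zero outside X).\<close>
definition L2 :: "'a set \<Rightarrow> 'a fn set" where
  "L2 \<Omega> = {\<psi>. \<forall>x. \<psi> x \<noteq> 0 \<longrightarrow> x \<subseteq> \<Omega>}"

definition L2r :: "'a set \<Rightarrow> nat \<Rightarrow> 'a fn set" where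
  "L2r \<Omega> r = {\<psi>. \<forall>x. \<psi> x \<noteq> 0 \<longrightarrow> x \<subseteq> \<Omega> \<and> card x = r}"

definition inner_L2 :: "'a set \<Rightarrow> 'a fn \<Rightarrow> 'a fn \<Rightarrow> complex" where
  "inner_L2 \<Omega> \<phi> \<psi> = (\<Sum>x\<in>Pow \<Omega>. \<phi> x * cnj (\<psi> x))"

definition Sym :: "'a set \<Rightarrow> ('a \<Rightarrow> 'a) set" where
  "Sym \<Omega> = {g. g permutes \<Omega>}"

definition rho :: "('a \<Rightarrow> 'a) \<Rightarrow> 'a fn \<Rightarrow> 'a fn" where
  "rho g \<psi> = (\<lambda>x. \<psi> (inv g ` x))"

definition subspace_fn :: "'a fn set \<Rightarrow> bool" where
  "subspace_fn V \<longleftrightarrow> (\<lambda>x. 0) \<in> V \<and> (\<forall>v\<in>V. \<forall>w\<in>V. (\<lambda>x. v x + w x) \<in> V)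
      \<and> (\<forall>c::complex. \<forall>v\<in>V. (\<lambda>x. c * v x) \<in> V)"

definition invariant :: "'a set \<Rightarrow> 'a fn set \<Rightarrow> bool" where
  "invariant \<Omega> V \<longleftrightarrow> (\<forall>g\<in>Sym \<Omega>. \<forall>v\<in>V. rho g v \<in> V)"

definition irreducible_sub :: "'a set \<Rightarrow> 'a fn set \<Rightarrow> bool" where
  "irreducible_sub \<Omega> V \<longleftrightarrow> subspace_fn V \<and> invariant \<Omega> V \<and> V \<noteq> {\<lambda>x. 0}
     \<and> (\<forall>W. subspace_fn W \<and> invariant \<Omega> W \<and> W \<subseteq> V \<longrightarrow> W = {\<lambda>x. 0} \<or> W = V)"

definition rep_iso :: "'a set \<Rightarrow> 'a fn set \<Rightarrow> 'a fn set \<Rightarrow> bool" where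
  "rep_iso \<Omega> V W \<longleftrightarrow> (\<exists>f. bij_betw f V W
      \<and> (\<forall>v\<in>V. \<forall>w\<in>V. f (\<lambda>x. v x + w x) = (\<lambda>x. f v x + f w x))
      \<and> (\<forall>c::complex. \<forall>v\<in>V. f (\<lambda>x. c * v x) = (\<lambda>x. c * f v x))
      \<and> (\<forall>g\<in>Sym \<Omega>. \<forall>v\<in>V. f (rho g v) = rho g (f v)))"

text \<open>Specht module of the two-row partition (n-s,s), realised inside the permutation
  module of tabloids; a tabloid of shape (n-s,s) is identified with its second row, an
  s-subset of Omega.  A tableau is given by its s columns (a!i over b!i), with all entries
  distinct; the remaining n-2s entries of the first row do not affect the polytabloid.
  The polytabloid e_t = sum over column permutations sigma of sgn(sigma) {sigma t}; swapping
  the columns in J gives second row {b!i | i notin J} union {a!i | i in J}, sign (-1)^|J|.\<close>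
definition tableaux2 :: "'a set \<Rightarrow> nat \<Rightarrow> ('a list \<times> 'a list) set" where
  "tableaux2 \<Omega> s = {(a, b). length a = s \<and> length b = s \<and> distinct (a @ b) \<and> set (a @ b) \<subseteq> \<Omega>}"

definition polytabloid :: "nat \<Rightarrow> 'a list \<Rightarrow> 'a list \<Rightarrow> 'a fn" where
  "polytabloid s a b = (\<lambda>x. \<Sum>J\<in>Pow {..<s}.
      if x = {b ! i | i. i < s \<and> i \<notin> J} \<union> {a ! i | i. i \<in> J} then (-1) ^ card J else 0)"

definition specht2 :: "'a set \<Rightarrow> nat \<Rightarrow> 'a fn set" where
  "specht2 \<Omega> s = {\<lambda>x. \<Sum>t\<in>tableaux2 \<Omega> s. c t * polytabloid s (fst t) (snd t) x | c. True}"

definition L2comp :: "'a set \<Rightarrow> nat \<Rightarrow> nat \<Rightarrow> 'a fn set" where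
  "L2comp \<Omega> r s = (THE V. V \<subseteq> L2r \<Omega> r \<and> irreducible_sub \<Omega> V \<and> rep_iso \<Omega> V (specht2 \<Omega> s))"

definition is_Lambda :: "'a set \<Rightarrow> nat \<Rightarrow> nat \<Rightarrow> nat \<Rightarrow> ('a fn \<Rightarrow> 'a fn) \<Rightarrow> bool" where
  "is_Lambda \<Omega> s r1 r2 \<Lambda> \<longleftrightarrow>
     (\<forall>\<psi>\<in>L2 \<Omega>. \<Lambda> \<psi> \<in> L2 \<Omega>)
     \<and> (\<forall>\<phi>\<in>L2 \<Omega>. \<forall>\<psi>\<in>L2 \<Omega>. \<Lambda> (\<lambda>x. \<phi> x + \<psi> x) = (\<lambda>x. \<Lambda> \<phi> x + \<Lambda> \<psi> x))
     \<and> (\<forall>c::complex. \<forall>\<psi>\<in>L2 \<Omega>. \<Lambda> (\<lambda>x. c * \<psi> x) = (\<lambda>x. c * \<Lambda> \<psi> x))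
     \<and> (\<forall>g\<in>Sym \<Omega>. \<forall>\<psi>\<in>L2 \<Omega>. \<Lambda> (rho g \<psi>) = rho g (\<Lambda> \<psi>))
     \<and> (\<exists>\<psi>\<in>L2 \<Omega>. \<Lambda> \<psi> \<noteq> (\<lambda>x. 0))
     \<and> \<Lambda> ` L2comp \<Omega> r1 s \<subseteq> L2comp \<Omega> r2 s
     \<and> (\<forall>\<psi>\<in>L2 \<Omega>. (\<forall>\<phi>\<in>L2comp \<Omega> r1 s. inner_L2 \<Omega> \<psi> \<phi> = 0) \<longrightarrow> \<Lambda> \<psi> = (\<lambda>x. 0))"

definition is_kernel :: "'a set \<Rightarrow> nat \<Rightarrow> nat \<Rightarrow> ('a fn \<Rightarrow> 'a fn) \<Rightarrow> (nat \<Rightarrow> complex) \<Rightarrow> bool" where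
  "is_kernel \<Omega> r1 r2 \<Lambda> lam \<longleftrightarrow>
     (\<forall>\<psi>\<in>L2r \<Omega> r1. \<forall>x2. x2 \<subseteq> \<Omega> \<and> card x2 = r2 \<longrightarrow>
        \<Lambda> \<psi> x2 = (\<Sum>x1\<in>{x. x \<subseteq> \<Omega> \<and> card x = r1}. lam (card (x2 - x1)) * \<psi> x1))"

end

theory Submission
  imports Defs
begin
definition good :: "nat \<Rightarrow> 'a list \<Rightarrow> 'a list \<Rightarrow> 'a set \<Rightarrow> bool" where
  "good s a b x \<longleftrightarrow> x \<subseteq> set a \<union> set b \<and> (\<forall>i<s. (a!i \<in> x) \<noteq> (b!i \<in> x))"

definition xJ :: "nat \<Rightarrow> 'a list \<Rightarrow> 'a list \<Rightarrow> nat set \<Rightarrow> 'a set" where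
  "xJ s a b J = {b ! i | i. i < s \<and> i \<notin> J} \<union> {a ! i | i. i \<in> J}"

definition swc :: "nat \<Rightarrow> 'a list \<Rightarrow> 'a list \<Rightarrow> nat set \<Rightarrow> 'a \<Rightarrow> 'a" where
  "swc s a b J z = (if \<exists>i<s. i \<in> J \<and> z = a!i then b ! (THE i. i < s \<and> z = a!i)
     else if \<exists>i<s. i \<in> J \<and> z = b!i then a ! (THE i. i < s \<and> z = b!i) else z)"

lemma sum_cancel:
  fixes f :: "'b \<Rightarrow> complex"
  assumes "finite A" "\<And>x. x \<in> A \<Longrightarrow> h x \<in> A" "\<And>x. x \<in> A \<Longrightarrow> h (h x) = x"
    "\<And>x. x \<in> A \<Longrightarrow> f (h x) = - f x"
  shows "sum f A = 0"
proof -
  have "sum f A = sum (\<lambda>x. f (h x)) A"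
    by (rule sum.reindex_bij_witness[where i=h and j=h]) (use assms in auto)
  also have "\<dots> = - sum f A" using assms(4) by (simp add: sum_negf)
  finally show ?thesis by simp
qed

locale tab =
  fixes \<Omega> :: "'a set" and s :: nat and a b :: "'a list"
  assumes fin: "finite \<Omega>" and la: "length a = s" and lb: "length b = s"
    and dist: "distinct (a @ b)" and sub: "set (a @ b) \<subseteq> \<Omega>"
begin

abbreviation "E \<equiv> set a \<union> set b"

lemma ab_ne: "i < s \<Longrightarrow> j < s \<Longrightarrow> a!i \<noteq> b!j"
  using dist la lb by (metis disjoint_iff distinct_append nth_mem)

lemma aa_eq: "i < s \<Longrightarrow> j < s \<Longrightarrow> (a!i = a!j) = (i = j)"
  using dist la by (simp add: nth_eq_iff_index_eq)

lemma bb_eq: "i < s \<Longrightarrow> j < s \<Longrightarrow> (b!i = b!j) = (i = j)"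
  using dist lb by (simp add: nth_eq_iff_index_eq)

lemma E_cases: "z \<in> E \<Longrightarrow> (\<And>i. i < s \<Longrightarrow> z = a!i \<Longrightarrow> P) \<Longrightarrow> (\<And>i. i < s \<Longrightarrow> z = b!i \<Longrightarrow> P) \<Longrightarrow> P"
  using la lb by (metis Un_iff in_set_conv_nth)

lemma a_in_E: "i < s \<Longrightarrow> a!i \<in> E" using la by simp
lemma b_in_E: "i < s \<Longrightarrow> b!i \<in> E" using lb by simp
lemma E_sub: "E \<subseteq> \<Omega>" using sub by simp

lemma xJ_mem_a: "J \<subseteq> {..<s} \<Longrightarrow> i < s \<Longrightarrow> (a!i \<in> xJ s a b J) = (i \<in> J)"
  unfolding xJ_def using ab_ne aa_eq by auto

lemma xJ_mem_b: "J \<subseteq> {..<s} \<Longrightarrow> i < s \<Longrightarrow> (b!i \<in> xJ s a b J) = (i \<notin> J)"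
  unfolding xJ_def using ab_ne bb_eq by (auto, metis subsetD lessThan_iff ab_ne)

lemma xJ_sub: "J \<subseteq> {..<s} \<Longrightarrow> xJ s a b J \<subseteq> E"
  unfolding xJ_def using la lb by auto

lemma good_xJ: "J \<subseteq> {..<s} \<Longrightarrow> good s a b (xJ s a b J)"
  unfolding good_def using xJ_sub xJ_mem_a xJ_mem_b by auto

lemma aset_xJ: "J \<subseteq> {..<s} \<Longrightarrow> {i. i<s \<and> a!i \<in> xJ s a b J} = J"
  using xJ_mem_a by auto

lemma good_eq_xJ: "good s a b x \<Longrightarrow> x = xJ s a b {i. i<s \<and> a!i \<in> x}"
proof
  assume g: "good s a b x"
  show "x \<subseteq> xJ s a b {i. i<s \<and> a!i \<in> x}"
  proof
    fix z assume z: "z \<in> x"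
    then have "z \<in> E" using g unfolding good_def by auto
    then show "z \<in> xJ s a b {i. i<s \<and> a!i \<in> x}"
    proof (rule E_cases)
      fix i assume "i < s" "z = a!i" then show ?thesis using z unfolding xJ_def by auto
    next
      fix i assume i: "i < s" "z = b!i"
      then have "a!i \<notin> x" using g z unfolding good_def by auto
      then show ?thesis using i unfolding xJ_def by auto
    qed
  qed
  show "xJ s a b {i. i<s \<and> a!i \<in> x} \<subseteq> x"
    using g unfolding xJ_def good_def by auto
qed

lemma good_mem_E: "good s a b x \<Longrightarrow> x \<subseteq> E" unfolding good_def by auto

lemma xJ_inj: "inj_on (xJ s a b) (Pow {..<s})"
  by (rule inj_onI) (metis PowD aset_xJ)

lemma poly_eq: "polytabloid s a b x = (if good s a b x then (-1)^card {i. i<s \<and> a!i \<in> x} else 0)"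
proof -
  have pe: "polytabloid s a b x = (\<Sum>J\<in>Pow {..<s}. if x = xJ s a b J then (-1) ^ card J else 0)"
    unfolding polytabloid_def xJ_def by simp
  show ?thesis
  proof (cases "good s a b x")
    case True
    define K where "K = {i. i<s \<and> a!i \<in> x}"
    have K: "K \<in> Pow {..<s}" unfolding K_def by auto
    have "\<And>J. J \<in> Pow {..<s} \<Longrightarrow> (x = xJ s a b J) = (J = K)"
      using True good_eq_xJ aset_xJ unfolding K_def by (metis PowD)
    then have "polytabloid s a b x = (\<Sum>J\<in>Pow {..<s}. if J = K then (-1) ^ card J else 0)"
      unfolding pe by (intro sum.cong) auto
    also have "\<dots> = (-1) ^ card K" using K by simp
    finally show ?thesis using True K_def by simp
  next
    case False
    then have "\<And>J. J \<in> Pow {..<s} \<Longrightarrow> x \<noteq> xJ s a b J" using good_xJ by blast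
    then show ?thesis unfolding pe using False by simp
  qed
qed

lemma the_a: "i < s \<Longrightarrow> (THE j. j < s \<and> a!i = a!j) = i"
  using aa_eq by (intro the_equality) auto
lemma the_b: "i < s \<Longrightarrow> (THE j. j < s \<and> b!i = b!j) = i"
  using bb_eq by (intro the_equality) auto

lemma swc_a: "i < s \<Longrightarrow> swc s a b J (a!i) = (if i \<in> J then b!i else a!i)"
proof -
  assume i: "i < s"
  have c1: "(\<exists>j<s. j \<in> J \<and> a!i = a!j) = (i \<in> J)" using aa_eq i by blast
  have c2: "\<not>(\<exists>j<s. j \<in> J \<and> a!i = b!j)" using ab_ne i by blast
  show ?thesis using c1 c2 the_a[OF i] by (auto simp: swc_def)
qed

lemma swc_b: "i < s \<Longrightarrow> swc s a b J (b!i) = (if i \<in> J then a!i else b!i)"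
proof -
  assume i: "i < s"
  have c1: "(\<exists>j<s. j \<in> J \<and> b!i = b!j) = (i \<in> J)" using bb_eq i by blast
  have c2: "\<not>(\<exists>j<s. j \<in> J \<and> b!i = a!j)" using ab_ne i by metis
  show ?thesis using c1 c2 the_b[OF i] by (auto simp: swc_def)
qed

lemma swc_other: "z \<notin> E \<Longrightarrow> swc s a b J z = z"
  unfolding swc_def using a_in_E b_in_E by auto

lemma swc_invol: "swc s a b J (swc s a b J z) = z"
proof (cases "z \<in> E")
  case True
  then show ?thesis by (rule E_cases) (auto simp: swc_a swc_b)
next
  case False then show ?thesis by (simp add: swc_other)
qed

lemma swc_E: "(swc s a b J z \<in> E) = (z \<in> E)"
proof (cases "z \<in> E")
  case True
  then show ?thesis by (rule E_cases) (auto simp: swc_a swc_b la lb)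
next
  case False then show ?thesis by (simp add: swc_other)
qed

lemma swc_mem: "(w \<in> swc s a b J ` x) = (swc s a b J w \<in> x)"
proof
  assume "w \<in> swc s a b J ` x"
  then obtain z where "z \<in> x" "w = swc s a b J z" by blast
  then show "swc s a b J w \<in> x" by (simp add: swc_invol)
next
  assume "swc s a b J w \<in> x"
  then have "swc s a b J (swc s a b J w) \<in> swc s a b J ` x" by blast
  then show "w \<in> swc s a b J ` x" by (simp add: swc_invol)
qed

lemma swc_bij: "bij (swc s a b J)"
  by (metis bijI' swc_invol)

lemma swc_permutes: "swc s a b J permutes \<Omega>"
proof -
  have "\<forall>z. z \<notin> \<Omega> \<longrightarrow> swc s a b J z = z" using E_sub swc_other by blast
  then show ?thesis unfolding permutes_def by (metis swc_invol)
qed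

lemma inv_swc: "inv (swc s a b J) = swc s a b J"
  by (metis inv_equality swc_invol)

lemma rho_swc: "rho (swc s a b J) \<phi> = (\<lambda>x. \<phi> (swc s a b J ` x))"
  unfolding rho_def inv_swc ..

lemma swc_img_sub_E: "(swc s a b J ` x \<subseteq> E) = (x \<subseteq> E)"
  using swc_E by auto

lemma swc_img_a: "i < s \<Longrightarrow> (a!i \<in> swc s a b J ` x) = (if i \<in> J then b!i \<in> x else a!i \<in> x)"
  by (simp add: swc_mem swc_a)
lemma swc_img_b: "i < s \<Longrightarrow> (b!i \<in> swc s a b J ` x) = (if i \<in> J then a!i \<in> x else b!i \<in> x)"
  by (simp add: swc_mem swc_b)

lemma good_swc: "good s a b (swc s a b J ` x) = good s a b x"
  unfolding good_def swc_img_sub_E using swc_img_a swc_img_b by auto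

lemma parity: "finite K \<Longrightarrow> finite J \<Longrightarrow>
   ((-1::complex) ^ card ((K - J) \<union> (J - K))) = (-1)^card K * (-1)^card J"
proof -
  assume f: "finite K" "finite J"
  have c1: "card ((K - J) \<union> (J - K)) = card (K - J) + card (J - K)"
    using f by (intro card_Un_disjoint) auto
  have c2: "card K = card (K - J) + card (K \<inter> J)"
    using card_Int_Diff[of K J] f by simp
  have c3: "card J = card (J - K) + card (K \<inter> J)"
    using card_Int_Diff[of J K] f by (simp add: Int_commute)
  have "(-1::complex)^card K * (-1)^card J = (-1)^(card (K - J) + card (J - K)) * ((-1)^card (K \<inter> J))^2"
    unfolding c2 c3 by (simp add: power_add power2_eq_square)
  also have "\<dots> = (-1)^(card (K - J) + card (J - K))"
    by (simp add: power_mult_distrib[symmetric] power_mult[symmetric] power_even_eq)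
  finally show ?thesis using c1 by simp
qed

lemma poly_swc: "J \<subseteq> {..<s} \<Longrightarrow>
   polytabloid s a b (swc s a b J ` x) = (-1)^card J * polytabloid s a b x"
proof (cases "good s a b x")
  case True
  assume J: "J \<subseteq> {..<s}"
  define K where "K = {i. i<s \<and> a!i \<in> x}"
  have "\<And>i. i < s \<Longrightarrow> (b!i \<in> x) = (a!i \<notin> x)" using True unfolding good_def by auto
  have "{i. i<s \<and> a!i \<in> swc s a b J ` x} = (K - J) \<union> (J - K)"
  proof (rule set_eqI)
    fix i
    show "(i \<in> {i. i<s \<and> a!i \<in> swc s a b J ` x}) = (i \<in> (K - J) \<union> (J - K))"
      unfolding K_def using J \<open>\<And>i. i < s \<Longrightarrow> (b!i \<in> x) = (a!i \<notin> x)\<close>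
      by (cases "i < s") (auto simp: swc_img_a)
  qed
  moreover have fK: "finite K" and fJ: "finite J" using J finite_subset unfolding K_def by auto
  ultimately show ?thesis
    unfolding poly_eq good_swc using True parity[OF fK fJ] by (simp add: K_def mult.commute)
next
  case False
  then show ?thesis unfolding poly_eq good_swc by simp
qed

definition R0 :: "'a set \<Rightarrow> 'a set" where
  "R0 x = (\<lambda>i. if a!i \<in> x then a!i else b!i) ` {..<s}"

lemma R0_card: "card (R0 x) = s"
proof -
  have inj: "inj_on (\<lambda>i. if a!i \<in> x then a!i else b!i) {..<s}"
  proof (rule inj_onI)
    fix i j assume "i \<in> {..<s}" "j \<in> {..<s}" and eq: "(if a!i \<in> x then a!i else b!i) = (if a!j \<in> x then a!j else b!j)"
    then show "i = j"
      using ab_ne[of i j] ab_ne[of j i] aa_eq[of i j] bb_eq[of i j] by (auto split: if_splits)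
  qed
  have "card (R0 x) = card {..<s}" unfolding R0_def by (rule card_image[OF inj])
  then show ?thesis by simp
qed

lemma R0_E: "R0 x \<subseteq> E" unfolding R0_def using a_in_E b_in_E by auto

lemma R0_sub: "\<forall>i<s. (a!i \<in> x) \<noteq> (b!i \<in> x) \<Longrightarrow> R0 x \<subseteq> x"
  unfolding R0_def by auto

lemma good_sub_R0: "good s a b x \<Longrightarrow> x \<subseteq> R0 x"
proof
  fix z assume g: "good s a b x" and z: "z \<in> x"
  then have "z \<in> E" unfolding good_def by auto
  then show "z \<in> R0 x"
  proof (rule E_cases)
    fix i assume "i < s" "z = a!i" then show ?thesis using z unfolding R0_def by force
  next
    fix i assume i: "i < s" "z = b!i"
    then have "a!i \<notin> x" using g z unfolding good_def by auto
    then show ?thesis using i unfolding R0_def by force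
  qed
qed

lemma card_good: "good s a b x \<Longrightarrow> card x = s"
  using good_sub_R0 R0_sub R0_card unfolding good_def by (metis subset_antisym)

lemma good_sub_Omega: "good s a b x \<Longrightarrow> x \<subseteq> \<Omega>"
  using good_mem_E E_sub by blast

lemma not_good_col: assumes "x \<subseteq> \<Omega>" "card x = s" "\<not> good s a b x"
  shows "\<exists>i<s. (a!i \<in> x) = (b!i \<in> x)"
proof (rule ccontr)
  assume "\<not> ?thesis"
  then have c: "\<forall>i<s. (a!i \<in> x) \<noteq> (b!i \<in> x)" by auto
  have "finite x" using assms(1) fin finite_subset by blast
  then have "R0 x = x" using R0_sub[OF c] R0_card assms(2) by (simp add: card_subset_eq)
  then have "x \<subseteq> E" using R0_E[of x] by simp
  then show False using c assms(3) unfolding good_def by auto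
qed

lemma swc_Omega: "(swc s a b J z \<in> \<Omega>) = (z \<in> \<Omega>)"
  by (metis E_sub subsetD swc_E swc_other)

lemma swc_img_Omega: "(swc s a b J ` x \<subseteq> \<Omega>) = (x \<subseteq> \<Omega>)"
  using swc_Omega by auto

lemma swc_card: "card (swc s a b J ` x) = card x"
  by (rule card_image[OF inj_on_subset[OF bij_is_inj[OF swc_bij] subset_UNIV]])

lemma symdiff_twice: "sym_diff K (sym_diff K J) = J" by blast

lemma aset_swc: "good s a b x \<Longrightarrow> J \<subseteq> {..<s} \<Longrightarrow>
   {i. i<s \<and> a!i \<in> swc s a b J ` x} = sym_diff {i. i<s \<and> a!i \<in> x} J"
proof (rule set_eqI)
  fix i assume g: "good s a b x" and J: "J \<subseteq> {..<s}"
  have "\<And>i. i < s \<Longrightarrow> (b!i \<in> x) = (a!i \<notin> x)" using g unfolding good_def by auto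
  then show "(i \<in> {i. i<s \<and> a!i \<in> swc s a b J ` x}) = (i \<in> sym_diff {i. i<s \<and> a!i \<in> x} J)"
    using J by (cases "i < s") (auto simp: swc_img_a)
qed

lemma swc_xJ: "K \<subseteq> {..<s} \<Longrightarrow> J \<subseteq> {..<s} \<Longrightarrow> swc s a b J ` xJ s a b K = xJ s a b (sym_diff K J)"
proof -
  assume K: "K \<subseteq> {..<s}" and J: "J \<subseteq> {..<s}"
  have g: "good s a b (swc s a b J ` xJ s a b K)" using good_swc good_xJ K by blast
  show ?thesis
    using good_eq_xJ[OF g] aset_swc[OF good_xJ[OF K] J] aset_xJ[OF K] by simp
qed

definition cu :: "'a fn \<Rightarrow> complex" where
  "cu u = (\<Sum>J\<in>Pow {..<s}. (-1)^card J * u (xJ s a b J))"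

lemma L2r_zero: "u \<in> L2r \<Omega> r \<Longrightarrow> \<not> (x \<subseteq> \<Omega> \<and> card x = r) \<Longrightarrow> u x = 0"
  unfolding L2r_def by auto

lemma kappa: assumes u: "u \<in> L2r \<Omega> s"
  shows "(\<Sum>J\<in>Pow {..<s}. (-1)^card J * u (swc s a b J ` x)) = cu u * polytabloid s a b x"
proof (cases "good s a b x")
  case True
  define K where "K = {i. i<s \<and> a!i \<in> x}"
  have K: "K \<subseteq> {..<s}" unfolding K_def by auto
  have x: "x = xJ s a b K" using good_eq_xJ[OF True] K_def by simp
  have "(\<Sum>J\<in>Pow {..<s}. (-1)^card J * u (swc s a b J ` x))
      = (\<Sum>J\<in>Pow {..<s}. (-1)^card J * u (xJ s a b (sym_diff K J)))"
    using x K swc_xJ by (intro sum.cong) auto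
  also have "\<dots> = (\<Sum>J\<in>Pow {..<s}. (-1)^card (sym_diff K J) * u (xJ s a b J))"
    by (rule sum.reindex_bij_witness[where i="\<lambda>J. sym_diff K J" and j="\<lambda>J. sym_diff K J"])
       (use K in \<open>auto simp: symdiff_twice\<close>)
  also have "\<dots> = (\<Sum>J\<in>Pow {..<s}. (-1)^card K * ((-1)^card J * u (xJ s a b J)))"
    using K by (intro sum.cong refl) (simp add: parity finite_subset)
  also have "\<dots> = (-1)^card K * cu u" unfolding cu_def by (simp add: sum_distrib_left)
  finally show ?thesis using True K_def by (simp add: poly_eq mult.commute)
next
  case False
  show ?thesis
  proof (cases "x \<subseteq> \<Omega> \<and> card x = s")
    case True
    then obtain i where i: "i < s" "(a!i \<in> x) = (b!i \<in> x)" using not_good_col False by blast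
    have same: "swc s a b (sym_diff J {i}) ` x = swc s a b J ` x" for J
    proof (rule set_eqI)
      fix w show "(w \<in> swc s a b (sym_diff J {i}) ` x) = (w \<in> swc s a b J ` x)"
        unfolding swc_mem
      proof (cases "w \<in> E")
        case True
        then show "(swc s a b (sym_diff J {i}) w \<in> x) = (swc s a b J w \<in> x)"
          by (rule E_cases) (use i in \<open>auto simp: swc_a swc_b\<close>)
      qed (simp add: swc_other)
    qed
    have "(\<Sum>J\<in>Pow {..<s}. (-1)^card J * u (swc s a b J ` x)) = 0"
    proof (rule sum_cancel[where h="\<lambda>J. sym_diff J {i}"])
      fix J assume J: "J \<in> Pow {..<s}"
      then have "finite J" using finite_subset by auto
      then show "(-1)^card (sym_diff J {i}) * u (swc s a b (sym_diff J {i}) ` x) = - ((-1)^card J * u (swc s a b J ` x))"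
        using parity[of J "{i}"] same by simp
    qed (use i in auto)
    then show ?thesis using False by (simp add: poly_eq)
  next
    case False
    have "u (swc s a b J ` x) = 0" for J
      by (rule L2r_zero[OF u]) (use False in \<open>simp add: swc_img_Omega swc_card\<close>)
    moreover have "\<not> good s a b x" using False card_good good_sub_Omega by blast
    ultimately show ?thesis by (simp add: poly_eq)
  qed
qed

lemma inner_poly: "inner_L2 \<Omega> u (polytabloid s a b) = cu u"
proof -
  have "inner_L2 \<Omega> u (polytabloid s a b) = (\<Sum>y\<in>Pow \<Omega>. u y * polytabloid s a b y)"
    unfolding inner_L2_def by (intro sum.cong) (auto simp: poly_eq)
  also have "\<dots> = (\<Sum>y\<in>xJ s a b ` Pow {..<s}. u y * polytabloid s a b y)"
  proof (rule sum.mono_neutral_right)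
    show "finite (Pow \<Omega>)" using fin by simp
    show "xJ s a b ` Pow {..<s} \<subseteq> Pow \<Omega>" using xJ_sub E_sub by blast
    show "\<forall>y\<in>Pow \<Omega> - xJ s a b ` Pow {..<s}. u y * polytabloid s a b y = 0"
    proof
      fix y assume "y \<in> Pow \<Omega> - xJ s a b ` Pow {..<s}"
      then have "\<not> good s a b y"
      proof (intro notI)
        assume "y \<in> Pow \<Omega> - xJ s a b ` Pow {..<s}" "good s a b y"
        then have "y = xJ s a b {i. i<s \<and> a!i\<in>y}" by (simp add: good_eq_xJ[symmetric])
        moreover have "{i. i<s \<and> a!i\<in>y} \<in> Pow {..<s}" by auto
        ultimately show False using \<open>y \<in> Pow \<Omega> - xJ s a b ` Pow {..<s}\<close> by blast
      qed
      then show "u y * polytabloid s a b y = 0" by (simp add: poly_eq)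
    qed
  qed
  also have "\<dots> = (\<Sum>J\<in>Pow {..<s}. u (xJ s a b J) * polytabloid s a b (xJ s a b J))"
    by (rule sum.reindex[OF xJ_inj, unfolded comp_def])
  also have "\<dots> = cu u" unfolding cu_def
    by (intro sum.cong refl) (simp add: poly_eq good_xJ aset_xJ mult.commute)
  finally show ?thesis .
qed

end

definition spanI :: "'i set \<Rightarrow> ('i \<Rightarrow> 'a fn) \<Rightarrow> 'a fn set" where
  "spanI I v = {\<lambda>x. \<Sum>i\<in>I. c i * v i x | c. True}"

lemma subspace_spanI: "subspace_fn (spanI I v)"
  unfolding subspace_fn_def spanI_def
proof (intro conjI ballI allI)
  show "(\<lambda>x. 0) \<in> {\<lambda>x. \<Sum>i\<in>I. c i * v i x |c. True}"
    by (rule CollectI, rule exI[where x="\<lambda>_. 0"]) simp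
next
  fix p q assume "p \<in> {\<lambda>x. \<Sum>i\<in>I. c i * v i x |c. True}" "q \<in> {\<lambda>x. \<Sum>i\<in>I. c i * v i x |c. True}"
  then obtain c1 c2 where "p = (\<lambda>x. \<Sum>i\<in>I. c1 i * v i x)" "q = (\<lambda>x. \<Sum>i\<in>I. c2 i * v i x)" by auto
  then show "(\<lambda>x. p x + q x) \<in> {\<lambda>x. \<Sum>i\<in>I. c i * v i x |c. True}"
    by (intro CollectI exI[where x="\<lambda>i. c1 i + c2 i"]) (simp add: sum.distrib distrib_right)
next
  fix d p assume "p \<in> {\<lambda>x. \<Sum>i\<in>I. c i * v i x |c. True}"
  then obtain c1 where "p = (\<lambda>x. \<Sum>i\<in>I. c1 i * v i x)" by auto
  then show "(\<lambda>x. d * p x) \<in> {\<lambda>x. \<Sum>i\<in>I. c i * v i x |c. True}"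
    by (intro CollectI exI[where x="\<lambda>i. d * c1 i"]) (simp add: sum_distrib_left mult.assoc)
qed

lemma subspace_sum: assumes "subspace_fn V" "finite F" "\<And>i. i \<in> F \<Longrightarrow> w i \<in> V"
  shows "(\<lambda>x. \<Sum>i\<in>F. c i * w i x) \<in> V"
  using assms(2,3)
proof (induction F rule: finite_induct)
  case empty then show ?case using assms(1) unfolding subspace_fn_def by simp
next
  case (insert j F)
  have "(\<lambda>x. c j * w j x) \<in> V" using assms(1) insert unfolding subspace_fn_def by simp
  moreover have "(\<lambda>x. \<Sum>i\<in>F. c i * w i x) \<in> V" using insert by simp
  moreover have add: "\<And>p q. p \<in> V \<Longrightarrow> q \<in> V \<Longrightarrow> (\<lambda>x. p x + q x) \<in> V"
    using assms(1) unfolding subspace_fn_def by blast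
  ultimately have "(\<lambda>x. c j * w j x + (\<Sum>i\<in>F. c i * w i x)) \<in> V"
    by (metis (no_types))
  then show ?case using insert by simp
qed

lemma delta_sum: "finite I \<Longrightarrow> j \<in> I \<Longrightarrow> (\<Sum>i\<in>I. (if i = j then 1 else 0) * f i) = (f j :: complex)"
proof -
  assume "finite I" "j \<in> I"
  have "(\<Sum>i\<in>I. (if i = j then 1 else 0) * f i) = (\<Sum>i\<in>I. if i = j then f i else 0)"
    by (rule sum.cong) auto
  then show ?thesis using \<open>finite I\<close> \<open>j \<in> I\<close> by simp
qed

lemma spanI_mem: "finite I \<Longrightarrow> j \<in> I \<Longrightarrow> v j \<in> spanI I v"
  unfolding spanI_def
  by (intro CollectI exI[where x="\<lambda>i. if i = j then 1 else 0"]) (simp add: delta_sum)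

lemma spanI_subset: "subspace_fn V \<Longrightarrow> finite I \<Longrightarrow> (\<And>i. i \<in> I \<Longrightarrow> v i \<in> V) \<Longrightarrow> spanI I v \<subseteq> V"
  unfolding spanI_def using subspace_sum by blast

definition lin_on :: "'a fn set \<Rightarrow> ('a fn \<Rightarrow> 'b fn) \<Rightarrow> bool" where
  "lin_on V f \<longleftrightarrow> (\<forall>v\<in>V. \<forall>w\<in>V. f (\<lambda>x. v x + w x) = (\<lambda>x. f v x + f w x))
      \<and> (\<forall>c::complex. \<forall>v\<in>V. f (\<lambda>x. c * v x) = (\<lambda>x. c * f v x))"

lemma lin_on_sum: assumes "lin_on V f" "subspace_fn V" "finite F" "\<And>i. i \<in> F \<Longrightarrow> w i \<in> V"
  shows "f (\<lambda>x. \<Sum>i\<in>F. c i * w i x) = (\<lambda>x. \<Sum>i\<in>F. c i * f (w i) x)"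
  using assms(3,4)
proof (induction F rule: finite_induct)
  case empty
  have z: "(\<lambda>x. 0) \<in> V" using assms(2) unfolding subspace_fn_def by simp
  have h: "\<And>c v. v \<in> V \<Longrightarrow> f (\<lambda>x. c * v x) = (\<lambda>x. c * f v x)"
    using assms(1) unfolding lin_on_def by blast
  show ?case using h[OF z, of 0] by simp
next
  case (insert j F)
  have a: "(\<lambda>x. c j * w j x) \<in> V" using assms(2) insert unfolding subspace_fn_def by simp
  have b: "(\<lambda>x. \<Sum>i\<in>F. c i * w i x) \<in> V" by (rule subspace_sum[OF assms(2)]) (use insert in auto)
  have "f (\<lambda>x. \<Sum>i\<in>insert j F. c i * w i x) = f (\<lambda>x. (c j * w j x) + (\<Sum>i\<in>F. c i * w i x))"
    using insert by simp
  also have "\<dots> = (\<lambda>x. f (\<lambda>x. c j * w j x) x + f (\<lambda>x. \<Sum>i\<in>F. c i * w i x) x)"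
  proof -
    have addf: "\<And>p q. p\<in>V \<Longrightarrow> q\<in>V \<Longrightarrow> f (\<lambda>x. p x + q x) = (\<lambda>x. f p x + f q x)"
      using assms(1) unfolding lin_on_def by blast
    show ?thesis using addf[OF a b] by simp
  qed
  also have "\<dots> = (\<lambda>x. c j * f (w j) x + (\<Sum>i\<in>F. c i * f (w i) x))"
    using insert assms(1) unfolding lin_on_def by simp
  finally show ?case using insert by simp
qed

lemma inner_sum_right: "inner_L2 \<Omega> \<phi> (\<lambda>x. \<Sum>i\<in>I. c i * v i x) = (\<Sum>i\<in>I. cnj (c i) * inner_L2 \<Omega> \<phi> (v i))"
proof -
  have "inner_L2 \<Omega> \<phi> (\<lambda>x. \<Sum>i\<in>I. c i * v i x) = (\<Sum>y\<in>Pow \<Omega>. \<Sum>i\<in>I. cnj (c i) * (\<phi> y * cnj (v i y)))"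
    unfolding inner_L2_def by (intro sum.cong refl) (simp add: sum_distrib_left mult_ac)
  also have "\<dots> = (\<Sum>i\<in>I. \<Sum>y\<in>Pow \<Omega>. cnj (c i) * (\<phi> y * cnj (v i y)))" by (rule sum.swap)
  also have "\<dots> = (\<Sum>i\<in>I. cnj (c i) * inner_L2 \<Omega> \<phi> (v i))"
    unfolding inner_L2_def by (simp add: sum_distrib_left)
  finally show ?thesis .
qed

lemma inner_self_zero: assumes "finite \<Omega>" "inner_L2 \<Omega> u u = 0" "y \<subseteq> \<Omega>" shows "u y = 0"
proof -
  have "inner_L2 \<Omega> u u = complex_of_real (\<Sum>z\<in>Pow \<Omega>. (cmod (u z))^2)"
    unfolding inner_L2_def of_real_sum by (intro sum.cong refl) (simp only: complex_norm_square)
  then have "complex_of_real (\<Sum>z\<in>Pow \<Omega>. (cmod (u z))^2) = 0" by (simp only: assms(2))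
  then have "(\<Sum>z\<in>Pow \<Omega>. (cmod (u z))^2) = 0" by (simp only: of_real_eq_0_iff)
  then have "\<forall>z\<in>Pow \<Omega>. (cmod (u z))^2 = 0" using assms(1) by (subst (asm) sum_nonneg_eq_0_iff) auto
  then show ?thesis using assms(3) by simp
qed

lemma perm_list: "distinct xs \<Longrightarrow> distinct ys \<Longrightarrow> length xs = length ys \<Longrightarrow> set xs \<subseteq> \<Omega> \<Longrightarrow> set ys \<subseteq> \<Omega>
  \<Longrightarrow> \<exists>g. g permutes \<Omega> \<and> map g xs = ys"
proof (induction xs arbitrary: ys)
  case Nil then show ?case by (metis length_0_conv list.map(1) permutes_id)
next
  case (Cons x xs)
  then obtain y ys' where ys: "ys = y # ys'" by (cases ys) auto
  then obtain g where g: "g permutes \<Omega>" "map g xs = ys'" using Cons by auto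
  define h where "h = transpose y (g x) \<circ> g"
  have gx: "g x \<in> \<Omega>" using g Cons.prems by (simp add: permutes_in_image)
  have "h permutes \<Omega>" unfolding h_def
    by (rule permutes_compose[OF g(1) permutes_swap_id]) (use Cons.prems ys gx in auto)
  moreover have "map h (x # xs) = ys"
  proof -
    have "\<forall>z\<in>set xs. h z = g z"
    proof
      fix z assume z: "z \<in> set xs"
      have "g z \<in> set ys'" using g(2) z by auto
      then have "g z \<noteq> y" using Cons.prems ys by auto
      moreover have "g z \<noteq> g x" using permutes_inj[OF g(1)] z Cons.prems(1) by (auto dest: injD)
      ultimately show "h z = g z" unfolding h_def by (simp add: transpose_def)
    qed
    then have "map h xs = ys'" using g(2) by (metis map_eq_conv)
    then show ?thesis using ys unfolding h_def by (simp add: transpose_def)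
  qed
  ultimately show ?case by blast
qed

lemma bij_inv_img_mem: assumes "bij g" shows "(w \<in> inv g ` x) = (g w \<in> x)"
proof
  assume "w \<in> inv g ` x"
  then obtain z where "z \<in> x" "w = inv g z" by blast
  then show "g w \<in> x" using assms by (simp add: bij_inv_eq_iff)
next
  assume "g w \<in> x"
  moreover have "inv g (g w) = w" using assms by (simp add: bij_is_inj)
  ultimately show "w \<in> inv g ` x" by (metis image_eqI)
qed

lemma bij_img_mem: assumes "bij g" shows "(z \<in> g ` A) = (inv g z \<in> A)"
proof
  assume "z \<in> g ` A"
  then obtain w where "w \<in> A" "z = g w" by blast
  then show "inv g z \<in> A" using assms by (simp add: bij_is_inj)
next
  assume "inv g z \<in> A"
  moreover have "g (inv g z) = z" using assms by (simp add: bij_is_surj surj_f_inv_f)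
  ultimately show "z \<in> g ` A" by (metis image_eqI)
qed

lemma bij_inv_img_sub: "bij g \<Longrightarrow> (inv g ` x \<subseteq> A) = (x \<subseteq> g ` A)"
proof -
  assume g: "bij g"
  show ?thesis using bij_img_mem[OF g, of _ A] by blast
qed

definition ptab :: "nat \<Rightarrow> 'a list \<times> 'a list \<Rightarrow> 'a fn" where
  "ptab s t = polytabloid s (fst t) (snd t)"

definition Gmap :: "('a \<Rightarrow> 'a) \<Rightarrow> 'a list \<times> 'a list \<Rightarrow> 'a list \<times> 'a list" where
  "Gmap g t = (map g (fst t), map g (snd t))"

lemma specht2_span: "specht2 \<Omega> s = spanI (tableaux2 \<Omega> s) (ptab s)"
  unfolding specht2_def spanI_def ptab_def ..

lemma tab_iff: "finite \<Omega> \<Longrightarrow> (t \<in> tableaux2 \<Omega> s) = tab \<Omega> s (fst t) (snd t)"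
  unfolding tableaux2_def tab_def by (cases t) auto

lemma tab_Gmap: assumes "tab \<Omega> s a b" "g permutes \<Omega>" shows "tab \<Omega> s (map g a) (map g b)"
proof -
  interpret tab \<Omega> s a b by fact
  have "inj g" using assms(2) permutes_inj by blast
  then show ?thesis using fin la lb dist sub permutes_in_image[OF assms(2)]
  proof -
    have "distinct (map g (a @ b))" using dist \<open>inj g\<close> by (simp add: distinct_map inj_on_subset[OF \<open>inj g\<close>] del: distinct_append map_append)
    moreover have "set (map g (a @ b)) \<subseteq> \<Omega>" using sub permutes_in_image[OF assms(2)] by auto
    ultimately show ?thesis using fin la lb unfolding tab_def by (simp del: distinct_append map_append add: map_append[symmetric])
  qed
qed

lemma poly_rho: assumes T: "tab \<Omega> s a b" and g: "g permutes \<Omega>"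
  shows "rho g (polytabloid s a b) = polytabloid s (map g a) (map g b)"
proof (rule ext)
  fix x
  interpret tab \<Omega> s a b by fact
  have T2: "tab \<Omega> s (map g a) (map g b)" by (rule tab_Gmap[OF T g])
  have bij: "bij g" using g permutes_bij by blast
  have ma: "\<And>i. i<s \<Longrightarrow> (a!i \<in> inv g ` x) = (map g a ! i \<in> x)" using la bij_inv_img_mem[OF bij] by simp
  have mb: "\<And>i. i<s \<Longrightarrow> (b!i \<in> inv g ` x) = (map g b ! i \<in> x)" using lb bij_inv_img_mem[OF bij] by simp
  have sb: "(inv g ` x \<subseteq> set a \<union> set b) = (x \<subseteq> set (map g a) \<union> set (map g b))"
    using bij_inv_img_sub[OF bij] by (simp add: image_Un)
  have gd: "good s a b (inv g ` x) = good s (map g a) (map g b) x" unfolding good_def using ma mb sb by auto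
  have cs: "{i. i<s \<and> a!i \<in> inv g ` x} = {i. i<s \<and> map g a ! i \<in> x}" using ma by auto
  show "rho g (polytabloid s a b) x = polytabloid s (map g a) (map g b) x"
    unfolding rho_def poly_eq tab.poly_eq[OF T2] gd cs ..
qed

lemma subspace_L2r: "subspace_fn (L2r \<Omega> r)"
  unfolding subspace_fn_def
proof (intro conjI ballI allI)
  show "(\<lambda>x. 0) \<in> L2r \<Omega> r" unfolding L2r_def by simp
next
  fix v w assume v: "v \<in> L2r \<Omega> r" and w: "w \<in> L2r \<Omega> r"
  show "(\<lambda>x. v x + w x) \<in> L2r \<Omega> r" unfolding L2r_def
  proof (intro CollectI allI impI)
    fix x assume "v x + w x \<noteq> 0"
    then have "v x \<noteq> 0 \<or> w x \<noteq> 0" by auto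
    then show "x \<subseteq> \<Omega> \<and> card x = r" using v w unfolding L2r_def by blast
  qed
next
  fix c :: complex and v assume v: "v \<in> L2r \<Omega> r"
  show "(\<lambda>x. c * v x) \<in> L2r \<Omega> r" using v unfolding L2r_def by auto
qed

lemma subspace_L2: "subspace_fn (L2 \<Omega>)"
  unfolding subspace_fn_def
proof (intro conjI ballI allI)
  show "(\<lambda>x. 0) \<in> L2 \<Omega>" unfolding L2_def by simp
next
  fix v w assume v: "v \<in> L2 \<Omega>" and w: "w \<in> L2 \<Omega>"
  show "(\<lambda>x. v x + w x) \<in> L2 \<Omega>" unfolding L2_def
  proof (intro CollectI allI impI)
    fix x assume "v x + w x \<noteq> 0"
    then have "v x \<noteq> 0 \<or> w x \<noteq> 0" by auto
    then show "x \<subseteq> \<Omega>" using v w unfolding L2_def by blast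
  qed
next
  fix c :: complex and v assume v: "v \<in> L2 \<Omega>"
  show "(\<lambda>x. c * v x) \<in> L2 \<Omega>" using v unfolding L2_def by auto
qed

lemma finite_tableaux: "finite \<Omega> \<Longrightarrow> finite (tableaux2 \<Omega> s)"
proof -
  assume f: "finite \<Omega>"
  have "tableaux2 \<Omega> s \<subseteq> {xs. set xs \<subseteq> \<Omega> \<and> length xs = s} \<times> {xs. set xs \<subseteq> \<Omega> \<and> length xs = s}"
    unfolding tableaux2_def by auto
  moreover have "finite ({xs. set xs \<subseteq> \<Omega> \<and> length xs = s} \<times> {xs. set xs \<subseteq> \<Omega> \<and> length xs = s})"
    using finite_lists_length_eq[OF f] by blast
  ultimately show ?thesis by (rule finite_subset)
qed

lemma ptab_L2r: "finite \<Omega> \<Longrightarrow> t \<in> tableaux2 \<Omega> s \<Longrightarrow> ptab s t \<in> L2r \<Omega> s"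
proof -
  assume f: "finite \<Omega>" and t: "t \<in> tableaux2 \<Omega> s"
  interpret tab \<Omega> s "fst t" "snd t" using tab_iff[OF f] t by blast
  show ?thesis unfolding L2r_def ptab_def using poly_eq good_sub_Omega card_good by (auto split: if_splits)
qed

lemma S_L2r: "finite \<Omega> \<Longrightarrow> specht2 \<Omega> s \<subseteq> L2r \<Omega> s"
  unfolding specht2_span by (rule spanI_subset[OF subspace_L2r finite_tableaux]) (auto intro: ptab_L2r)

lemma L2r_L2: "L2r \<Omega> r \<subseteq> L2 \<Omega>" unfolding L2r_def L2_def by auto

lemma Gmap_inv: "g permutes \<Omega> \<Longrightarrow> Gmap (inv g) (Gmap g t) = t"
  unfolding Gmap_def by (simp add: permutes_inj inv_o_cancel)
lemma Gmap_inv2: "g permutes \<Omega> \<Longrightarrow> Gmap g (Gmap (inv g) t) = t"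
  unfolding Gmap_def using permutes_surj[of g \<Omega>]
  by (simp add: surj_iff)

lemma Gmap_tab: "finite \<Omega> \<Longrightarrow> g permutes \<Omega> \<Longrightarrow> t \<in> tableaux2 \<Omega> s \<Longrightarrow> Gmap g t \<in> tableaux2 \<Omega> s"
  using tab_iff tab_Gmap unfolding Gmap_def by (metis fst_conv snd_conv)

lemma rho_ptab: "finite \<Omega> \<Longrightarrow> g permutes \<Omega> \<Longrightarrow> t \<in> tableaux2 \<Omega> s \<Longrightarrow> rho g (ptab s t) = ptab s (Gmap g t)"
  unfolding ptab_def Gmap_def using poly_rho tab_iff by (metis fst_conv snd_conv)

lemma S_invariant: assumes f: "finite \<Omega>" shows "invariant \<Omega> (specht2 \<Omega> s)"
  unfolding invariant_def
proof (intro ballI)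
  fix g v assume g: "g \<in> Sym \<Omega>" and v: "v \<in> specht2 \<Omega> s"
  have gp: "g permutes \<Omega>" using g unfolding Sym_def by simp
  have gi: "inv g permutes \<Omega>" using permutes_inv[OF gp] .
  obtain c where c: "v = (\<lambda>x. \<Sum>t\<in>tableaux2 \<Omega> s. c t * ptab s t x)" using v unfolding specht2_span spanI_def by auto
  have "rho g v = (\<lambda>x. \<Sum>t\<in>tableaux2 \<Omega> s. c t * rho g (ptab s t) x)"
    unfolding c rho_def ..
  also have "\<dots> = (\<lambda>x. \<Sum>t\<in>tableaux2 \<Omega> s. c t * ptab s (Gmap g t) x)"
    using rho_ptab[OF f gp] by (intro ext sum.cong refl) simp
  also have "\<dots> = (\<lambda>x. \<Sum>t\<in>tableaux2 \<Omega> s. c (Gmap (inv g) t) * ptab s t x)"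
  proof (rule ext, rule sum.reindex_bij_witness[where i="Gmap (inv g)" and j="Gmap g"])
  qed (auto simp: Gmap_inv[OF gp] Gmap_inv2[OF gp] Gmap_tab[OF f gp] Gmap_tab[OF f gi])
  finally have eq: "rho g v = (\<lambda>x. \<Sum>t\<in>tableaux2 \<Omega> s. c (Gmap (inv g) t) * ptab s t x)" .
  show "rho g v \<in> specht2 \<Omega> s" unfolding specht2_span spanI_def
    by (intro CollectI exI[of _ "\<lambda>t. c (Gmap (inv g) t)"]) (simp add: eq)
qed

lemma tab_exists: assumes "finite \<Omega>" "2 * s \<le> card \<Omega>" shows "\<exists>a b. tab \<Omega> s a b"
proof -
  obtain xs where xs: "set xs = \<Omega>" "distinct xs" using finite_distinct_list[OF assms(1)] by blast
  have len: "length xs = card \<Omega>" using xs distinct_card by fastforce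
  define a where "a = take s xs"
  define b where "b = take s (drop s xs)"
  have "a @ b = take (2*s) xs" unfolding a_def b_def by (simp add: take_add mult_2)
  then have "distinct (a @ b)" "set (a @ b) \<subseteq> \<Omega>" using xs by (auto dest: in_set_takeD)
  moreover have "length a = s" "length b = s" unfolding a_def b_def using len assms(2) by auto
  ultimately show ?thesis using assms(1) unfolding tab_def by blast
qed

lemma ptab_nonzero: assumes "tab \<Omega> s a b" shows "polytabloid s a b \<noteq> (\<lambda>x. 0)"
proof -
  interpret tab \<Omega> s a b by fact
  have "polytabloid s a b (xJ s a b {}) = (-1)^card {i. i<s \<and> a!i \<in> xJ s a b {}}"
    using poly_eq good_xJ[of "{}"] by simp
  also have "\<dots> = 1" by (subst aset_xJ) auto
  finally have "polytabloid s a b (xJ s a b {}) = 1" .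
  then show ?thesis by (metis zero_neq_one)
qed

lemma S_irred: assumes f: "finite \<Omega>" and T0: "tab \<Omega> s a0 b0"
  shows "irreducible_sub \<Omega> (specht2 \<Omega> s)"
  unfolding irreducible_sub_def
proof (intro conjI allI impI)
  show sS: "subspace_fn (specht2 \<Omega> s)" unfolding specht2_span by (rule subspace_spanI)
  show "invariant \<Omega> (specht2 \<Omega> s)" by (rule S_invariant[OF f])
  have t0: "(a0, b0) \<in> tableaux2 \<Omega> s" using tab_iff[OF f, of "(a0,b0)"] T0 by simp
  have e0: "ptab s (a0, b0) \<in> specht2 \<Omega> s" unfolding specht2_span by (rule spanI_mem[OF finite_tableaux[OF f] t0])
  then show "specht2 \<Omega> s \<noteq> {\<lambda>x. 0}" using ptab_nonzero[OF T0] unfolding ptab_def by auto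
  fix W assume W: "subspace_fn W \<and> invariant \<Omega> W \<and> W \<subseteq> specht2 \<Omega> s"
  show "W = {\<lambda>x. 0} \<or> W = specht2 \<Omega> s"
  proof (cases "W = {\<lambda>x. 0}")
    case False
    have z: "(\<lambda>x. 0) \<in> W" using W unfolding subspace_fn_def by simp
    then obtain u where u: "u \<in> W" "u \<noteq> (\<lambda>x. 0)" using False by blast
    have uS: "u \<in> specht2 \<Omega> s" using u W by blast
    then have uL: "u \<in> L2r \<Omega> s" using S_L2r[OF f] by blast
    have "\<exists>t\<in>tableaux2 \<Omega> s. inner_L2 \<Omega> u (ptab s t) \<noteq> 0"
    proof (rule ccontr)
      assume "\<not> ?thesis"
      then have allz: "\<forall>t\<in>tableaux2 \<Omega> s. inner_L2 \<Omega> u (ptab s t) = 0" by blast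
      obtain c where c: "u = (\<lambda>x. \<Sum>t\<in>tableaux2 \<Omega> s. c t * ptab s t x)" using uS unfolding specht2_span spanI_def by auto
      have "inner_L2 \<Omega> u u = 0" using allz by (subst (2) c) (simp add: inner_sum_right)
      then have "\<forall>y. u y = 0" using inner_self_zero[OF f] uL unfolding L2r_def by blast
      then show False using u by auto
    qed
    then obtain t where t: "t \<in> tableaux2 \<Omega> s" and ne: "inner_L2 \<Omega> u (ptab s t) \<noteq> 0" by blast
    interpret T: tab \<Omega> s "fst t" "snd t" using tab_iff[OF f] t by blast
    let ?e = "polytabloid s (fst t) (snd t)"
    have cne: "T.cu u \<noteq> 0" using ne T.inner_poly unfolding ptab_def by simp
    have "(\<lambda>x. \<Sum>J\<in>Pow {..<s}. (-1)^card J * rho (swc s (fst t) (snd t) J) u x) \<in> W"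
    proof (rule subspace_sum)
      show "subspace_fn W" using W by blast
      fix J show "rho (swc s (fst t) (snd t) J) u \<in> W"
      proof -
        have "swc s (fst t) (snd t) J \<in> Sym \<Omega>" using T.swc_permutes unfolding Sym_def by blast
        moreover have "invariant \<Omega> W" using W by blast
        ultimately show ?thesis using u(1) unfolding invariant_def by blast
      qed
    qed simp
    then have "(\<lambda>x. T.cu u * ?e x) \<in> W" using T.kappa[OF uL] by (simp add: T.rho_swc)
    moreover have scal: "\<And>c v. v \<in> W \<Longrightarrow> (\<lambda>x. c * v x) \<in> W" using W unfolding subspace_fn_def by blast
    ultimately have "(\<lambda>x. inverse (T.cu u) * (T.cu u * ?e x)) \<in> W" by blast
    moreover have "(\<lambda>x. inverse (T.cu u) * (T.cu u * ?e x)) = ?e"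
      by (rule ext) (simp add: cne mult.assoc[symmetric])
    ultimately have eW: "?e \<in> W" by simp
    have "\<forall>t'\<in>tableaux2 \<Omega> s. ptab s t' \<in> W"
    proof
      fix t' assume t': "t' \<in> tableaux2 \<Omega> s"
      interpret T2: tab \<Omega> s "fst t'" "snd t'" using tab_iff[OF f] t' by blast
      have "length (fst t @ snd t) = length (fst t' @ snd t')" using T.la T.lb T2.la T2.lb by simp
      then obtain g where g: "g permutes \<Omega>" "map g (fst t @ snd t) = fst t' @ snd t'"
        using perm_list[OF T.dist T2.dist _ T.sub T2.sub] by blast
      then have "map g (fst t) = fst t'" "map g (snd t) = snd t'"
        using T.la T2.la by (auto simp: append_eq_append_conv)
      then have "rho g ?e = ptab s t'" using poly_rho[OF T.tab_axioms g(1)] unfolding ptab_def by simp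
      moreover have "rho g ?e \<in> W"
      proof -
        have "g \<in> Sym \<Omega>" using g(1) unfolding Sym_def by blast
        moreover have "invariant \<Omega> W" using W by blast
        ultimately show ?thesis using eW unfolding invariant_def by blast
      qed
      ultimately show "ptab s t' \<in> W" by simp
    qed
    moreover have "subspace_fn W" using W by blast
    ultimately have "specht2 \<Omega> s \<subseteq> W" unfolding specht2_span
      by (intro spanI_subset[OF _ finite_tableaux[OF f]]) auto
    moreover have "W \<subseteq> specht2 \<Omega> s" using W by blast
    ultimately show ?thesis by blast
  qed simp
qed

definition Tm :: "'a set \<Rightarrow> nat \<Rightarrow> nat \<Rightarrow> 'a fn \<Rightarrow> 'a fn" where
  "Tm \<Omega> r s f = (\<lambda>x. if x \<subseteq> \<Omega> \<and> card x = r then (\<Sum>y\<in>{y. y \<subseteq> x \<and> card y = s}. f y) else 0)"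

lemma Tm_add: "Tm \<Omega> r s (\<lambda>x. f x + g x) = (\<lambda>x. Tm \<Omega> r s f x + Tm \<Omega> r s g x)"
  unfolding Tm_def by (auto simp: sum.distrib)

lemma Tm_scal: "Tm \<Omega> r s (\<lambda>x. c * f x) = (\<lambda>x. c * Tm \<Omega> r s f x)"
  unfolding Tm_def by (auto simp: sum_distrib_left)

lemma Tm_zero: "Tm \<Omega> r s (\<lambda>x. 0) = (\<lambda>x. 0)"
  unfolding Tm_def by auto

lemma Tm_sum: "Tm \<Omega> r s (\<lambda>x. \<Sum>i\<in>I. c i * v i x) = (\<lambda>x. \<Sum>i\<in>I. c i * Tm \<Omega> r s (v i) x)"
proof (rule ext)
  fix x
  show "Tm \<Omega> r s (\<lambda>x. \<Sum>i\<in>I. c i * v i x) x = (\<Sum>i\<in>I. c i * Tm \<Omega> r s (v i) x)"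
  proof (cases "x \<subseteq> \<Omega> \<and> card x = r")
    case True
    then show ?thesis unfolding Tm_def by (simp add: sum_distrib_left sum.swap[of _ I])
  next
    case False
    show ?thesis unfolding Tm_def if_not_P[OF False] by simp
  qed
qed

lemma Tm_L2r: "Tm \<Omega> r s f \<in> L2r \<Omega> r"
  unfolding Tm_def L2r_def by auto

lemma bij_card_img: "bij g \<Longrightarrow> card (g ` y) = card y"
  by (meson bij_betw_imp_inj_on card_image inj_on_subset subset_UNIV)

lemma Tm_equiv: assumes g: "g permutes \<Omega>" shows "Tm \<Omega> r s (rho g f) = rho g (Tm \<Omega> r s f)"
proof (rule ext)
  fix x
  have bij: "bij g" using g permutes_bij by blast
  have bi: "bij (inv g)" using bij bij_imp_bij_inv by blast
  have gO: "g ` \<Omega> = \<Omega>" using permutes_image[OF g] .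
  have c1: "(inv g ` x \<subseteq> \<Omega>) = (x \<subseteq> \<Omega>)" using bij_inv_img_sub[OF bij, of x \<Omega>] gO by simp
  have c2: "card (inv g ` x) = card x" using bij_card_img[OF bi] .
  show "Tm \<Omega> r s (rho g f) x = rho g (Tm \<Omega> r s f) x"
  proof (cases "x \<subseteq> \<Omega> \<and> card x = r")
    case True
    have "(\<Sum>y\<in>{y. y \<subseteq> x \<and> card y = s}. f (inv g ` y)) = (\<Sum>y\<in>{y. y \<subseteq> inv g ` x \<and> card y = s}. f y)"
    proof (rule sum.reindex_bij_witness[where i="\<lambda>y. g ` y" and j="\<lambda>y. inv g ` y"])
      fix y assume y: "y \<in> {y. y \<subseteq> x \<and> card y = s}"
      have "\<And>z. g (inv g z) = z" using bij by (simp add: bij_is_surj surj_f_inv_f)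
      then show "g ` inv g ` y = y" by (simp add: image_image)
      show "inv g ` y \<in> {y. y \<subseteq> inv g ` x \<and> card y = s}" using y bij_card_img[OF bi] by auto
    next
      fix y assume y: "y \<in> {y. y \<subseteq> inv g ` x \<and> card y = s}"
      show "inv g ` g ` y = y" using bij by (simp add: image_comp bij_is_inj)
      have "g ` y \<subseteq> g ` inv g ` x" using y by blast
      also have "\<dots> = x"
      proof -
        have "\<And>z. g (inv g z) = z" using bij by (simp add: bij_is_surj surj_f_inv_f)
        then show ?thesis by (simp add: image_image)
      qed
      finally show "g ` y \<in> {y. y \<subseteq> x \<and> card y = s}" using y bij_card_img[OF bij] by auto
    qed simp
    then show ?thesis unfolding Tm_def rho_def using True c1 c2 by simp
  next
    case False
    have F2: "\<not>(inv g ` x \<subseteq> \<Omega> \<and> card (inv g ` x) = r)" using False c1 c2 by simp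
    show ?thesis unfolding Tm_def rho_def if_not_P[OF False] if_not_P[OF F2] ..
  qed
qed

context tab
begin

lemma swc1_fix: "i < s \<Longrightarrow> (a!i \<in> x) = (b!i \<in> x) \<Longrightarrow> swc s a b {i} ` x = x"
proof (rule set_eqI)
  fix w assume i: "i < s" "(a!i \<in> x) = (b!i \<in> x)"
  show "(w \<in> swc s a b {i} ` x) = (w \<in> x)"
    unfolding swc_mem
  proof (cases "w \<in> E")
    case True
    then show "(swc s a b {i} w \<in> x) = (w \<in> x)"
      by (rule E_cases) (use i in \<open>auto simp: swc_a swc_b\<close>)
  qed (simp add: swc_other)
qed

lemma not_good_col2: "i < s \<Longrightarrow> (a!i \<in> x) = (b!i \<in> x) \<Longrightarrow> \<not> good s a b (x \<inter> E)"
  unfolding good_def using a_in_E b_in_E by auto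

lemma Tm_poly: "Tm \<Omega> r s (polytabloid s a b) x = (if x \<subseteq> \<Omega> \<and> card x = r then polytabloid s a b (x \<inter> E) else 0)"
proof (cases "x \<subseteq> \<Omega> \<and> card x = r")
  case True
  let ?A = "{y. y \<subseteq> x \<and> card y = s}"
  have fx: "finite x" using True fin finite_subset by blast
  have fA: "finite ?A" using fx by simp
  have "(\<Sum>y\<in>?A. polytabloid s a b y) = polytabloid s a b (x \<inter> E)"
  proof (cases "\<exists>i<s. (a!i \<in> x) = (b!i \<in> x)")
    case True
    then obtain i where i: "i < s" "(a!i \<in> x) = (b!i \<in> x)" by blast
    have rhs: "polytabloid s a b (x \<inter> E) = 0" using not_good_col2[OF i] by (simp add: poly_eq)
    show ?thesis
    proof (cases "a!i \<in> x")
      case True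
      have "(\<Sum>y\<in>?A. polytabloid s a b y) = 0"
      proof (rule sum_cancel[where h="\<lambda>y. swc s a b {i} ` y"])
        fix y assume y: "y \<in> ?A"
        have "swc s a b {i} ` y \<subseteq> swc s a b {i} ` x" using y by blast
        then show "swc s a b {i} ` y \<in> ?A" using swc1_fix[OF i] y swc_card by auto
        show "swc s a b {i} ` swc s a b {i} ` y = y" by (simp add: image_comp swc_invol comp_def)
        show "polytabloid s a b (swc s a b {i} ` y) = - polytabloid s a b y"
          using poly_swc[of "{i}" y] i by simp
      qed (rule fA)
      then show ?thesis using rhs by simp
    next
      case False
      have "\<And>y. y \<in> ?A \<Longrightarrow> polytabloid s a b y = 0"
      proof -
        fix y assume "y \<in> ?A"
        then have "a!i \<notin> y" "b!i \<notin> y" using False i by auto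
        then have "\<not> good s a b y" using i unfolding good_def by auto
        then show "polytabloid s a b y = 0" by (simp add: poly_eq)
      qed
      then show ?thesis using rhs by simp
    qed
  next
    case False
    then have xor: "\<forall>i<s. (a!i \<in> x) \<noteq> (b!i \<in> x)" by blast
    have gx: "good s a b (x \<inter> E)" unfolding good_def using xor a_in_E b_in_E by auto
    have "\<And>y. y \<in> ?A \<Longrightarrow> polytabloid s a b y = (if y = x \<inter> E then polytabloid s a b y else 0)"
    proof -
      fix y assume y: "y \<in> ?A"
      show "polytabloid s a b y = (if y = x \<inter> E then polytabloid s a b y else 0)"
      proof (cases "good s a b y")
        case True
        have "y = x \<inter> E"
        proof
          show "y \<subseteq> x \<inter> E" using y True unfolding good_def by auto
          show "x \<inter> E \<subseteq> y"
          proof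
            fix z assume z: "z \<in> x \<inter> E"
            then have "z \<in> E" by blast
            then show "z \<in> y"
            proof (rule E_cases)
              fix i assume "i < s" "z = a!i"
              then show ?thesis using z True y xor unfolding good_def by blast
            next
              fix i assume "i < s" "z = b!i"
              then show ?thesis using z True y xor unfolding good_def by blast
            qed
          qed
        qed
        then show ?thesis by simp
      next
        case False
        then show ?thesis using gx by (auto simp: poly_eq)
      qed
    qed
    then have "(\<Sum>y\<in>?A. polytabloid s a b y) = (\<Sum>y\<in>?A. if y = x \<inter> E then polytabloid s a b y else 0)"
      by (rule sum.cong[OF refl])
    also have "\<dots> = polytabloid s a b (x \<inter> E)"
      using fA card_good[OF gx] by simp
    finally show ?thesis .
  qed
  then show ?thesis unfolding Tm_def using True by simp
next
  case False
  show ?thesis unfolding Tm_def if_not_P[OF False] by simp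
qed

lemma Tm_poly_nonzero: assumes "s \<le> r" "r - s \<le> card \<Omega> - 2 * s"
  shows "Tm \<Omega> r s (polytabloid s a b) \<noteq> (\<lambda>x. 0)"
proof -
  have cE: "card E = 2 * s" using dist la lb by (simp add: card_Un_disjoint distinct_card[symmetric])
  have "card (\<Omega> - E) = card \<Omega> - 2 * s" using cE E_sub fin by (simp add: card_Diff_subset finite_subset)
  then obtain z0 where z0: "z0 \<subseteq> \<Omega> - E" "card z0 = r - s" using assms obtain_subset_with_card_n by metis
  define x where "x = xJ s a b {} \<union> z0"
  have fz: "finite z0" using z0 fin finite_subset by blast
  have xE: "x \<inter> E = xJ s a b {}" unfolding x_def using z0 xJ_sub[of "{}"] by auto
  have "card x = s + (r - s)" unfolding x_def using z0 fz xJ_sub[of "{}"] card_good[OF good_xJ[of "{}"]]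
    by (subst card_Un_disjoint) (auto intro: finite_subset[OF _ finite_subset[OF E_sub fin]])
  then have cx: "card x = r" using assms by simp
  have xO: "x \<subseteq> \<Omega>" unfolding x_def using z0 xJ_sub[of "{}"] E_sub by auto
  have "polytabloid s a b (xJ s a b {}) = (-1)^card {i. i<s \<and> a!i \<in> xJ s a b {}}"
    using poly_eq good_xJ[of "{}"] by simp
  also have "\<dots> = 1" by (subst aset_xJ) auto
  finally have "Tm \<Omega> r s (polytabloid s a b) x = 1" using Tm_poly xE cx xO by simp
  then show ?thesis by (metis zero_neq_one)
qed

lemma fix_E_perm: assumes z0: "z0 \<subseteq> \<Omega> - E" and z: "z \<subseteq> \<Omega> - E" and c: "card z0 = card z"
  shows "\<exists>\<pi>. \<pi> permutes \<Omega> \<and> (\<forall>w\<in>E. \<pi> w = w) \<and> \<pi> ` z0 = z"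
proof -
  have f0: "finite z0" "finite z" using z0 z fin by (metis Diff_subset finite_subset subset_trans)+
  obtain zs0 where zs0: "set zs0 = z0" "distinct zs0" using finite_distinct_list[OF f0(1)] by blast
  obtain zs where zs: "set zs = z" "distinct zs" using finite_distinct_list[OF f0(2)] by blast
  have l: "length zs0 = length zs" using zs0 zs c distinct_card by metis
  have d1: "distinct ((a @ b) @ zs0)" using dist zs0 z0 by auto
  have d2: "distinct ((a @ b) @ zs)" using dist zs z by auto
  obtain \<pi> where p: "\<pi> permutes \<Omega>" "map \<pi> ((a @ b) @ zs0) = (a @ b) @ zs"
  proof -
    have "length ((a @ b) @ zs0) = length ((a @ b) @ zs)" using l by simp
    moreover have "set ((a @ b) @ zs0) \<subseteq> \<Omega>" "set ((a @ b) @ zs) \<subseteq> \<Omega>" using sub zs0 zs z0 z by auto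
    ultimately show ?thesis using perm_list[OF d1 d2] that by blast
  qed
  then have "map \<pi> (a @ b) @ map \<pi> zs0 = (a @ b) @ zs" by (simp only: map_append)
  then have m1: "map \<pi> (a @ b) = a @ b" and m2: "map \<pi> zs0 = zs"
    using append_eq_append_conv[of "map \<pi> (a @ b)" "a @ b" "map \<pi> zs0" zs] by auto
  have "\<forall>w\<in>E. \<pi> w = w"
  proof
    fix w assume "w \<in> E"
    then have "w \<in> set (a @ b)" by simp
    then show "\<pi> w = w" using m1 by (metis map_eq_conv map_ident)
  qed
  moreover have "\<pi> ` z0 = z" using m2 zs0 zs by (metis list.set_map)
  ultimately show ?thesis using p by blast
qed

lemma shape: assumes sr: "s \<le> r" and z0: "z0 \<subseteq> \<Omega> - E" "card z0 = r - s"
  and gL: "g \<in> L2r \<Omega> r"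
  and anti: "\<And>J x. J \<subseteq> {..<s} \<Longrightarrow> g (swc s a b J ` x) = (-1)^card J * g x"
  and sym: "\<And>\<pi> x. \<pi> permutes \<Omega> \<Longrightarrow> (\<forall>w\<in>E. \<pi> w = w) \<Longrightarrow> g (\<pi> ` x) = g x"
  shows "g = (\<lambda>x. g (xJ s a b {} \<union> z0) * Tm \<Omega> r s (polytabloid s a b) x)"
proof (rule ext)
  fix x
  show "g x = g (xJ s a b {} \<union> z0) * Tm \<Omega> r s (polytabloid s a b) x"
  proof (cases "x \<subseteq> \<Omega> \<and> card x = r")
    case False
    then show ?thesis using gL unfolding L2r_def by (auto simp: Tm_poly)
  next
    case True
    show ?thesis
    proof (cases "\<exists>i<s. (a!i \<in> x) = (b!i \<in> x)")
      case True
      then obtain i where i: "i < s" "(a!i \<in> x) = (b!i \<in> x)" by blast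
      have "g x = - g x" using anti[of "{i}" x] swc1_fix[OF i] i by simp
      then have "g x = 0" by simp
      moreover have "polytabloid s a b (x \<inter> E) = 0" using not_good_col2[OF i] by (simp add: poly_eq)
      ultimately show ?thesis by (simp add: Tm_poly)
    next
      case False
      then have xor: "\<forall>i<s. (a!i \<in> x) \<noteq> (b!i \<in> x)" by blast
      have gx: "good s a b (x \<inter> E)" unfolding good_def using xor a_in_E b_in_E by auto
      define K where "K = {i. i<s \<and> a!i \<in> x}"
      have K: "K \<subseteq> {..<s}" unfolding K_def by auto
      have KE: "{i. i<s \<and> a!i \<in> x \<inter> E} = K" unfolding K_def using a_in_E by auto
      have "x \<inter> E = xJ s a b {i. i<s \<and> a!i \<in> x \<inter> E}" by (rule good_eq_xJ[OF gx])
      then have xEK: "x \<inter> E = xJ s a b K" by (simp only: KE)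
      define z where "z = x - E"
      have fx: "finite x" using True fin finite_subset by blast
      have "card x = card (x \<inter> E) + card z" unfolding z_def using fx card_Int_Diff by blast
      then have cz: "card z = r - s" using card_good[OF gx] True by simp
      have zs: "z \<subseteq> \<Omega> - E" unfolding z_def using True by auto
      have xs: "x = xJ s a b K \<union> z" unfolding z_def using xEK by blast
      have "swc s a b K ` z = id ` z" by (rule image_cong) (use zs swc_other in auto)
      then have swz: "swc s a b K ` z = z" by simp
      have "swc s a b K ` (xJ s a b {} \<union> z) = xJ s a b K \<union> z"
        using swc_xJ[of "{}" K] K swz by (simp add: image_Un)
      then have "g x = (-1)^card K * g (xJ s a b {} \<union> z)"
        using anti[OF K, of "xJ s a b {} \<union> z"] xs by simp
      moreover obtain \<pi> where p: "\<pi> permutes \<Omega>" "\<forall>w\<in>E. \<pi> w = w" "\<pi> ` z0 = z"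
        using fix_E_perm[OF z0(1) zs] z0(2) cz by auto
      have "\<pi> ` xJ s a b {} = id ` xJ s a b {}" by (rule image_cong) (use p(2) xJ_sub[of "{}"] in auto)
      then have "\<pi> ` xJ s a b {} = xJ s a b {}" by simp
      then have "\<pi> ` (xJ s a b {} \<union> z0) = xJ s a b {} \<union> z" using p(3) by (simp add: image_Un)
      then have "g (xJ s a b {} \<union> z) = g (xJ s a b {} \<union> z0)" using sym[OF p(1,2)] by metis
      moreover have "Tm \<Omega> r s (polytabloid s a b) x = (-1)^card K"
        using Tm_poly True xEK poly_eq good_xJ[OF K] aset_xJ[OF K] by simp
      ultimately show ?thesis by simp
    qed
  qed
qed

end

lemma (in tab) z0_exists: assumes "s \<le> r" "r \<le> card \<Omega> - s"
  shows "\<exists>z0. z0 \<subseteq> \<Omega> - E \<and> card z0 = r - s"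
proof -
  have cE: "card E = 2 * s" using dist la lb by (simp add: card_Un_disjoint distinct_card[symmetric])
  have "card (\<Omega> - E) = card \<Omega> - 2 * s" using cE E_sub fin by (simp add: card_Diff_subset finite_subset)
  moreover have "r - s \<le> card \<Omega> - 2 * s" using assms by linarith
  ultimately show ?thesis using obtain_subset_with_card_n by metis
qed

lemma rho_zero: "rho g (\<lambda>x. 0) = (\<lambda>x. 0)" unfolding rho_def by simp

lemma Tm_span: "Tm \<Omega> r s ` spanI I v = spanI I (\<lambda>i. Tm \<Omega> r s (v i))"
proof
  show "Tm \<Omega> r s ` spanI I v \<subseteq> spanI I (\<lambda>i. Tm \<Omega> r s (v i))" unfolding spanI_def by (auto simp: Tm_sum)
  show "spanI I (\<lambda>i. Tm \<Omega> r s (v i)) \<subseteq> Tm \<Omega> r s ` spanI I v"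
  proof
    fix w assume "w \<in> spanI I (\<lambda>i. Tm \<Omega> r s (v i))"
    then obtain c where "w = (\<lambda>x. \<Sum>i\<in>I. c i * Tm \<Omega> r s (v i) x)" unfolding spanI_def by auto
    then have "w = Tm \<Omega> r s (\<lambda>x. \<Sum>i\<in>I. c i * v i x)" by (simp add: Tm_sum)
    moreover have "(\<lambda>x. \<Sum>i\<in>I. c i * v i x) \<in> spanI I v" unfolding spanI_def by auto
    ultimately show "w \<in> Tm \<Omega> r s ` spanI I v" by blast
  qed
qed

lemma irr_dest: assumes "irreducible_sub \<Omega> V" "subspace_fn W" "invariant \<Omega> W" "W \<subseteq> V"
  shows "W = {\<lambda>x. 0} \<or> W = V"
proof -
  have "\<forall>W. subspace_fn W \<and> invariant \<Omega> W \<and> W \<subseteq> V \<longrightarrow> W = {\<lambda>x. 0} \<or> W = V"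
    using assms(1) unfolding irreducible_sub_def by (elim conjE)
  then show ?thesis using assms(2-4) by (elim allE[of _ W]) (simp only: simp_thms)
qed

locale setting =
  fixes \<Omega> :: "'a set" and r s :: nat
  assumes fin: "finite \<Omega>" and sr: "s \<le> r" and rn: "r \<le> card \<Omega> - s" and sn: "2 * s \<le> card \<Omega>"
begin

abbreviation "S \<equiv> specht2 \<Omega> s"
abbreviation "T \<equiv> Tm \<Omega> r s"
abbreviation "TS \<equiv> Tm \<Omega> r s ` specht2 \<Omega> s"

lemma t0: obtains a0 b0 where "tab \<Omega> s a0 b0"
  using tab_exists[OF fin sn] by blast

lemma S_irr: "irreducible_sub \<Omega> S"
  using t0 S_irred[OF fin] by metis

lemma S_sub: "subspace_fn S" unfolding specht2_span by (rule subspace_spanI)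

lemma S_add: "p \<in> S \<Longrightarrow> q \<in> S \<Longrightarrow> (\<lambda>x. p x + q x) \<in> S"
  using S_sub unfolding subspace_fn_def by blast
lemma S_scal: "p \<in> S \<Longrightarrow> (\<lambda>x. c * p x) \<in> S"
  using S_sub unfolding subspace_fn_def by blast
lemma S_zero: "(\<lambda>x. 0) \<in> S"
  using S_sub unfolding subspace_fn_def by blast
lemma S_inv: "g \<in> Sym \<Omega> \<Longrightarrow> p \<in> S \<Longrightarrow> rho g p \<in> S"
  using S_invariant[OF fin] unfolding invariant_def by blast

lemma ptab_S: "t \<in> tableaux2 \<Omega> s \<Longrightarrow> ptab s t \<in> S"
  unfolding specht2_span by (rule spanI_mem[OF finite_tableaux[OF fin]])

lemma T_equiv: "g \<in> Sym \<Omega> \<Longrightarrow> T (rho g p) = rho g (T p)"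
  using Tm_equiv unfolding Sym_def by blast

lemma exists_T_nonzero: "\<exists>p\<in>S. T p \<noteq> (\<lambda>x. 0)"
proof -
  obtain a0 b0 where T0: "tab \<Omega> s a0 b0" by (rule t0)
  interpret tab \<Omega> s a0 b0 by (rule T0)
  have "(a0, b0) \<in> tableaux2 \<Omega> s" using tab_iff[OF fin, of "(a0,b0)"] T0 by simp
  then have "ptab s (a0, b0) \<in> S" by (rule ptab_S)
  moreover have "T (ptab s (a0, b0)) \<noteq> (\<lambda>x. 0)"
    unfolding ptab_def using Tm_poly_nonzero sr rn by simp
  ultimately show ?thesis by blast
qed

lemma T_inj: "inj_on T S"
proof -
  define K where "K = {f \<in> S. T f = (\<lambda>x. 0)}"
  have sK: "subspace_fn K" unfolding subspace_fn_def
  proof (intro conjI ballI allI)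
    show "(\<lambda>x. 0) \<in> K" unfolding K_def by (simp add: S_zero Tm_zero)
  next
    fix v w assume v: "v \<in> K" and w: "w \<in> K"
    then have "(\<lambda>x. v x + w x) \<in> S" using S_add unfolding K_def by simp
    moreover have "T (\<lambda>x. v x + w x) = (\<lambda>x. 0)" using v w unfolding K_def Tm_add by simp
    ultimately show "(\<lambda>x. v x + w x) \<in> K" unfolding K_def by simp
  next
    fix c :: complex and v assume v: "v \<in> K"
    then have "(\<lambda>x. c * v x) \<in> S" using S_scal unfolding K_def by simp
    moreover have "T (\<lambda>x. c * v x) = (\<lambda>x. 0)" using v unfolding K_def Tm_scal by simp
    ultimately show "(\<lambda>x. c * v x) \<in> K" unfolding K_def by simp
  qed
  have iK: "invariant \<Omega> K" unfolding invariant_def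
  proof (intro ballI)
    fix g v assume g: "g \<in> Sym \<Omega>" and v: "v \<in> K"
    then have "rho g v \<in> S" using S_inv unfolding K_def by simp
    moreover have "T (rho g v) = (\<lambda>x. 0)" using v T_equiv[OF g] rho_zero unfolding K_def by simp
    ultimately show "rho g v \<in> K" unfolding K_def by simp
  qed
  have "K \<subseteq> S" unfolding K_def by blast
  then have "K = {\<lambda>x. 0} \<or> K = S" using irr_dest[OF S_irr sK iK] by blast
  moreover have "K \<noteq> S" using exists_T_nonzero unfolding K_def by blast
  ultimately have K0: "K = {\<lambda>x. 0}" by blast
  show ?thesis
  proof (rule inj_onI)
    fix p q assume p: "p \<in> S" and q: "q \<in> S" and eq: "T p = T q"
    define d where "d = (\<lambda>x. p x + (-1) * q x)"
    have "d \<in> S" unfolding d_def using S_add S_scal p q by blast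
    moreover have "T d = (\<lambda>x. 0)" unfolding d_def Tm_add Tm_scal eq by simp
    ultimately have "d \<in> K" unfolding K_def by blast
    then have "d = (\<lambda>x. 0)" using K0 by blast
    then have "\<And>x. p x + (-1) * q x = 0" unfolding d_def by metis
    then show "p = q" by (intro ext) (simp add: add_eq_0_iff2)
  qed
qed

lemma TS_sub: "subspace_fn TS"
  unfolding subspace_fn_def
proof (intro conjI ballI allI)
  have "(\<lambda>x. 0) = T (\<lambda>x. 0)" by (simp add: Tm_zero)
  then show "(\<lambda>x. 0) \<in> TS" by (rule image_eqI[OF _ S_zero])
next
  fix v w assume "v \<in> TS" "w \<in> TS"
  then obtain p q where "p \<in> S" "q \<in> S" "v = T p" "w = T q" by blast
  then have "(\<lambda>x. v x + w x) = T (\<lambda>x. p x + q x)" by (simp add: Tm_add)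
  then show "(\<lambda>x. v x + w x) \<in> TS" by (rule image_eqI[OF _ S_add[OF \<open>p \<in> S\<close> \<open>q \<in> S\<close>]])
next
  fix c :: complex and v assume "v \<in> TS"
  then obtain p where "p \<in> S" "v = T p" by blast
  then have "(\<lambda>x. c * v x) = T (\<lambda>x. c * p x)" by (simp add: Tm_scal)
  then show "(\<lambda>x. c * v x) \<in> TS" by (rule image_eqI[OF _ S_scal[OF \<open>p \<in> S\<close>]])
qed

lemma TS_inv: "invariant \<Omega> TS"
  unfolding invariant_def
proof (intro ballI)
  fix g v assume g: "g \<in> Sym \<Omega>" and "v \<in> TS"
  then obtain p where "p \<in> S" "v = T p" by blast
  then have "rho g v = T (rho g p)" using T_equiv[OF g] by simp
  then show "rho g v \<in> TS" by (rule image_eqI[OF _ S_inv[OF g \<open>p \<in> S\<close>]])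
qed

lemma TS_irr: "irreducible_sub \<Omega> TS"
  unfolding irreducible_sub_def
proof (intro conjI allI impI)
  show "subspace_fn TS" by (rule TS_sub)
  show "invariant \<Omega> TS" by (rule TS_inv)
  obtain p where p: "p \<in> S" "T p \<noteq> (\<lambda>x. 0)" using exists_T_nonzero by blast
  have "T p \<in> TS" using p(1) by (rule imageI)
  then show "TS \<noteq> {\<lambda>x. 0}" using p(2) by force
  fix W assume W: "subspace_fn W \<and> invariant \<Omega> W \<and> W \<subseteq> TS"
  define W' where "W' = {p \<in> S. T p \<in> W}"
  have Wz: "(\<lambda>x. 0) \<in> W" using W unfolding subspace_fn_def by blast
  have Wa: "\<And>v w. v \<in> W \<Longrightarrow> w \<in> W \<Longrightarrow> (\<lambda>x. v x + w x) \<in> W" using W unfolding subspace_fn_def by blast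
  have Ws: "\<And>c v. v \<in> W \<Longrightarrow> (\<lambda>x. c * v x) \<in> W" using W unfolding subspace_fn_def by blast
  have Wi: "\<And>g v. g \<in> Sym \<Omega> \<Longrightarrow> v \<in> W \<Longrightarrow> rho g v \<in> W" using W unfolding invariant_def by blast
  have sW': "subspace_fn W'" unfolding subspace_fn_def W'_def
  proof (intro conjI ballI allI)
    show "(\<lambda>x. 0) \<in> {p \<in> S. T p \<in> W}" using S_zero Wz by (simp add: Tm_zero)
  next
    fix v w assume "v \<in> {p \<in> S. T p \<in> W}" "w \<in> {p \<in> S. T p \<in> W}"
    then show "(\<lambda>x. v x + w x) \<in> {p \<in> S. T p \<in> W}" using S_add Wa by (simp add: Tm_add)
  next
    fix c :: complex and v assume "v \<in> {p \<in> S. T p \<in> W}"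
    then show "(\<lambda>x. c * v x) \<in> {p \<in> S. T p \<in> W}" using S_scal Ws by (simp add: Tm_scal)
  qed
  have iW': "invariant \<Omega> W'" unfolding invariant_def
  proof (intro ballI)
    fix g v assume g: "g \<in> Sym \<Omega>" and v: "v \<in> W'"
    have "rho g v \<in> S" using S_inv[OF g] v unfolding W'_def by simp
    moreover have "T (rho g v) \<in> W" using T_equiv[OF g] Wi[OF g] v unfolding W'_def by simp
    ultimately show "rho g v \<in> W'" unfolding W'_def by simp
  qed
  have "W' \<subseteq> S" unfolding W'_def by blast
  then have "W' = {\<lambda>x. 0} \<or> W' = S" using irr_dest[OF S_irr sW' iW'] by blast
  then show "W = {\<lambda>x. 0} \<or> W = TS"
  proof
    assume W0: "W' = {\<lambda>x. 0}"
    have "W \<subseteq> {\<lambda>x. 0}"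
    proof
      fix w assume w: "w \<in> W"
      then obtain p where p: "p \<in> S" "w = T p" using W by blast
      then have "p \<in> W'" unfolding W'_def using w by blast
      then have "p = (\<lambda>x. 0)" using W0 by blast
      then show "w \<in> {\<lambda>x. 0}" using p Tm_zero by simp
    qed
    then show ?thesis using Wz by blast
  next
    assume "W' = S"
    then have "TS \<subseteq> W" unfolding W'_def by blast
    then show ?thesis using W by blast
  qed
qed

lemma TS_iso: "rep_iso \<Omega> TS S"
  unfolding rep_iso_def
proof (intro exI[where x="the_inv_into S T"] conjI ballI allI)
  show bb: "bij_betw (the_inv_into S T) TS S" by (rule bij_betw_the_inv_into[OF inj_on_imp_bij_betw[OF T_inj]])
  have th: "\<And>p. p \<in> S \<Longrightarrow> the_inv_into S T (T p) = p" using the_inv_into_f_f[OF T_inj] by blast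
  fix v assume "v \<in> TS"
  then obtain p where p: "p \<in> S" "v = T p" by blast
  { fix w assume "w \<in> TS"
    then obtain q where q: "q \<in> S" "w = T q" by blast
    have "the_inv_into S T (\<lambda>x. v x + w x) = the_inv_into S T (T (\<lambda>x. p x + q x))"
      using p q by (simp add: Tm_add)
    also have "\<dots> = (\<lambda>x. p x + q x)" using th[OF S_add[OF p(1) q(1)]] .
    finally show "the_inv_into S T (\<lambda>x. v x + w x) = (\<lambda>x. the_inv_into S T v x + the_inv_into S T w x)"
      using th p q by simp }
  { fix c :: complex
    have "the_inv_into S T (\<lambda>x. c * v x) = the_inv_into S T (T (\<lambda>x. c * p x))"
      using p by (simp add: Tm_scal)
    also have "\<dots> = (\<lambda>x. c * p x)" using th[OF S_scal[OF p(1)]] .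
    finally show "the_inv_into S T (\<lambda>x. c * v x) = (\<lambda>x. c * the_inv_into S T v x)"
      using th p by simp }
  { fix g assume g: "g \<in> Sym \<Omega>"
    have "the_inv_into S T (rho g v) = the_inv_into S T (T (rho g p))"
      using p T_equiv[OF g] by simp
    also have "\<dots> = rho g p" using th[OF S_inv[OF g p(1)]] .
    finally show "the_inv_into S T (rho g v) = rho g (the_inv_into S T v)"
      using th p by simp }
qed

end

lemma inv_fix: assumes "\<pi> permutes \<Omega>" "\<pi> w = w" shows "inv \<pi> w = w"
  using assms by (metis permutes_inverses(2))

context setting
begin

lemma unique: assumes VL: "V \<subseteq> L2r \<Omega> r" and Vi: "irreducible_sub \<Omega> V" and Vr: "rep_iso \<Omega> V S"
  shows "V = TS"
proof -
  obtain f where fb: "bij_betw f V S"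
    and fa: "\<forall>v\<in>V. \<forall>w\<in>V. f (\<lambda>x. v x + w x) = (\<lambda>x. f v x + f w x)"
    and fs: "\<forall>c::complex. \<forall>v\<in>V. f (\<lambda>x. c * v x) = (\<lambda>x. c * f v x)"
    and fe: "\<forall>g\<in>Sym \<Omega>. \<forall>v\<in>V. f (rho g v) = rho g (f v)"
    using Vr unfolding rep_iso_def by blast
  have sV: "subspace_fn V" and iV: "invariant \<Omega> V" and nV: "V \<noteq> {\<lambda>x. 0}"
    using Vi unfolding irreducible_sub_def by auto
  have Va: "\<And>p q. p \<in> V \<Longrightarrow> q \<in> V \<Longrightarrow> (\<lambda>x. p x + q x) \<in> V" using sV unfolding subspace_fn_def by blast
  have Vs: "\<And>c p. p \<in> V \<Longrightarrow> (\<lambda>x. c * p x) \<in> V" using sV unfolding subspace_fn_def by blast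
  have Vg: "\<And>g p. g \<in> Sym \<Omega> \<Longrightarrow> p \<in> V \<Longrightarrow> rho g p \<in> V" using iV unfolding invariant_def by blast
  define \<theta> where "\<theta> = the_inv_into V f"
  have inj: "inj_on f V" using fb bij_betw_imp_inj_on by blast
  have tf: "\<And>v. v \<in> V \<Longrightarrow> \<theta> (f v) = v" unfolding \<theta>_def using the_inv_into_f_f[OF inj] by blast
  have ft: "\<And>w. w \<in> S \<Longrightarrow> f (\<theta> w) = w" unfolding \<theta>_def using f_the_inv_into_f_bij_betw[OF fb] by blast
  have tb: "bij_betw \<theta> S V" unfolding \<theta>_def by (rule bij_betw_the_inv_into[OF fb])
  have tV: "\<And>w. w \<in> S \<Longrightarrow> \<theta> w \<in> V" using tb bij_betwE by blast
  have timg: "\<theta> ` S = V" using tb bij_betw_imp_surj_on by blast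
  have ta: "\<theta> (\<lambda>x. p x + q x) = (\<lambda>x. \<theta> p x + \<theta> q x)" if p: "p \<in> S" and q: "q \<in> S" for p q
  proof -
    have "f (\<lambda>x. \<theta> p x + \<theta> q x) = (\<lambda>x. f (\<theta> p) x + f (\<theta> q) x)" using fa tV p q by blast
    then have "f (\<lambda>x. \<theta> p x + \<theta> q x) = (\<lambda>x. p x + q x)" using ft p q by simp
    then have "\<theta> (\<lambda>x. p x + q x) = \<theta> (f (\<lambda>x. \<theta> p x + \<theta> q x))" by simp
    also have "\<dots> = (\<lambda>x. \<theta> p x + \<theta> q x)" using tf Va tV p q by blast
    finally show ?thesis .
  qed
  have ts: "\<theta> (\<lambda>x. c * p x) = (\<lambda>x. c * \<theta> p x)" if p: "p \<in> S" for c p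
  proof -
    have "f (\<lambda>x. c * \<theta> p x) = (\<lambda>x. c * f (\<theta> p) x)" using fs tV p by blast
    then have "f (\<lambda>x. c * \<theta> p x) = (\<lambda>x. c * p x)" using ft p by simp
    then have "\<theta> (\<lambda>x. c * p x) = \<theta> (f (\<lambda>x. c * \<theta> p x))" by simp
    also have "\<dots> = (\<lambda>x. c * \<theta> p x)" using tf Vs tV p by blast
    finally show ?thesis .
  qed
  have te: "\<theta> (rho g p) = rho g (\<theta> p)" if g: "g \<in> Sym \<Omega>" and p: "p \<in> S" for g p
  proof -
    have "f (rho g (\<theta> p)) = rho g (f (\<theta> p))" using fe tV g p by blast
    then have "f (rho g (\<theta> p)) = rho g p" using ft p by simp
    then have "\<theta> (rho g p) = \<theta> (f (rho g (\<theta> p)))" by simp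
    also have "\<dots> = rho g (\<theta> p)" using tf Vg tV g p by blast
    finally show ?thesis .
  qed
  have lin: "lin_on S \<theta>" unfolding lin_on_def using ta ts by blast
  have shape_t: "\<exists>c. \<theta> (ptab s t) = (\<lambda>x. c * T (ptab s t) x)" if t: "t \<in> tableaux2 \<Omega> s" for t
  proof -
    interpret tab \<Omega> s "fst t" "snd t" using tab_iff[OF fin] t by blast
    let ?e = "polytabloid s (fst t) (snd t)"
    have eS: "?e \<in> S" using ptab_S[OF t] unfolding ptab_def .
    let ?G = "\<theta> ?e"
    have GL: "?G \<in> L2r \<Omega> r" using tV[OF eS] VL by blast
    have anti: "?G (swc s (fst t) (snd t) J ` x) = (-1)^card J * ?G x" if J: "J \<subseteq> {..<s}" for J x
    proof -
      have sw: "swc s (fst t) (snd t) J \<in> Sym \<Omega>" using swc_permutes unfolding Sym_def by blast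
      have "rho (swc s (fst t) (snd t) J) ?e = (\<lambda>x. (-1)^card J * ?e x)"
        unfolding rho_swc using poly_swc[OF J] by simp
      then have "rho (swc s (fst t) (snd t) J) ?G = (\<lambda>x. (-1)^card J * ?G x)"
        using te[OF sw eS] ts[OF eS] by simp
      then show ?thesis unfolding rho_swc by metis
    qed
    have sym: "?G (\<pi> ` x) = ?G x" if p: "\<pi> permutes \<Omega>" and fx: "\<forall>w\<in>set (fst t) \<union> set (snd t). \<pi> w = w" for \<pi> x
    proof -
      have ip: "inv \<pi> permutes \<Omega>" using permutes_inv[OF p] .
      have ig: "inv \<pi> \<in> Sym \<Omega>" using ip unfolding Sym_def by blast
      have "map (inv \<pi>) (fst t) = fst t" "map (inv \<pi>) (snd t) = snd t"
        using fx inv_fix[OF p] by (auto intro: map_idI)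
      then have "rho (inv \<pi>) ?e = ?e" using poly_rho[OF tab_axioms ip] by simp
      then have "rho (inv \<pi>) ?G = ?G" using te[OF ig eS] by simp
      then have "?G (inv (inv \<pi>) ` x) = ?G x" unfolding rho_def by metis
      moreover have "inv (inv \<pi>) = \<pi>" using p permutes_bij inv_inv_eq by blast
      ultimately show ?thesis by simp
    qed
    obtain z0 where z0: "z0 \<subseteq> \<Omega> - (set (fst t) \<union> set (snd t))" "card z0 = r - s" using z0_exists sr rn by blast
    have "?G = (\<lambda>x. ?G (xJ s (fst t) (snd t) {} \<union> z0) * T ?e x)"
      by (rule shape[OF sr z0 GL anti sym]) auto
    then show ?thesis unfolding ptab_def by blast
  qed
  then obtain cc where cc: "\<And>t. t \<in> tableaux2 \<Omega> s \<Longrightarrow> \<theta> (ptab s t) = (\<lambda>x. cc t * T (ptab s t) x)"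
    by metis
  have "V \<subseteq> TS"
  proof
    fix v assume "v \<in> V"
    then obtain w where w: "w \<in> S" "v = \<theta> w" using timg by blast
    then obtain c where c: "w = (\<lambda>x. \<Sum>t\<in>tableaux2 \<Omega> s. c t * ptab s t x)"
      unfolding specht2_span spanI_def by blast
    have "v = (\<lambda>x. \<Sum>t\<in>tableaux2 \<Omega> s. c t * \<theta> (ptab s t) x)"
      unfolding w(2) c by (rule lin_on_sum[OF lin S_sub finite_tableaux[OF fin] ptab_S])
    also have "\<dots> = (\<lambda>x. \<Sum>t\<in>tableaux2 \<Omega> s. (c t * cc t) * T (ptab s t) x)"
      using cc by (intro ext sum.cong refl) simp
    also have "\<dots> = T (\<lambda>x. \<Sum>t\<in>tableaux2 \<Omega> s. (c t * cc t) * ptab s t x)"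
      by (simp add: Tm_sum)
    finally have "v = T (\<lambda>x. \<Sum>t\<in>tableaux2 \<Omega> s. (c t * cc t) * ptab s t x)" .
    moreover have "(\<lambda>x. \<Sum>t\<in>tableaux2 \<Omega> s. (c t * cc t) * ptab s t x) \<in> S"
      unfolding specht2_span spanI_def by (intro CollectI exI[of _ "\<lambda>t. c t * cc t"]) simp
    ultimately show "v \<in> TS" by blast
  qed
  then have "V = {\<lambda>x. 0} \<or> V = TS" using irr_dest[OF TS_irr sV iV] by blast
  then show ?thesis using nV by blast
qed

lemma L2comp_eq: "L2comp \<Omega> r s = TS"
  unfolding L2comp_def
proof (rule the_equality)
  show "TS \<subseteq> L2r \<Omega> r \<and> irreducible_sub \<Omega> TS \<and> rep_iso \<Omega> TS S"
    using Tm_L2r TS_irr TS_iso by blast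
  fix V assume "V \<subseteq> L2r \<Omega> r \<and> irreducible_sub \<Omega> V \<and> rep_iso \<Omega> V S"
  then show "V = TS" using unique by blast
qed

end

lemma inner_diff_left: "inner_L2 \<Omega> (\<lambda>x. f x - g x) h = inner_L2 \<Omega> f h - inner_L2 \<Omega> g h"
  unfolding inner_L2_def by (simp add: sum_subtractf left_diff_distrib)

lemma inner_scal_left: "inner_L2 \<Omega> (\<lambda>x. c * f x) h = c * inner_L2 \<Omega> f h"
  unfolding inner_L2_def by (simp add: sum_distrib_left mult.assoc)

lemma inner_add_right: "inner_L2 \<Omega> f (\<lambda>x. g x + h x) = inner_L2 \<Omega> f g + inner_L2 \<Omega> f h"
  unfolding inner_L2_def by (simp add: sum.distrib distrib_left)

lemma inner_zero_right: "(\<And>y. y \<subseteq> \<Omega> \<Longrightarrow> w y = 0) \<Longrightarrow> inner_L2 \<Omega> f w = 0"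
  unfolding inner_L2_def by simp

lemma proj_exists:
  fixes v :: "'i \<Rightarrow> 'a fn"
  assumes fO: "finite \<Omega>" and fI: "finite I"
  shows "\<exists>c. \<forall>i\<in>I. inner_L2 \<Omega> (\<lambda>x. \<psi> x - (\<Sum>k\<in>I. c k * v k x)) (v i) = 0"
  using fI
proof (induction I arbitrary: \<psi> rule: finite_induct)
  case empty then show ?case by simp
next
  case (insert j I)
  obtain c1 where c1: "\<forall>i\<in>I. inner_L2 \<Omega> (\<lambda>x. \<psi> x - (\<Sum>k\<in>I. c1 k * v k x)) (v i) = 0"
    using insert.IH by blast
  obtain c2 where c2: "\<forall>i\<in>I. inner_L2 \<Omega> (\<lambda>x. v j x - (\<Sum>k\<in>I. c2 k * v k x)) (v i) = 0"
    using insert.IH by blast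
  define p1 where "p1 = (\<lambda>x. \<Sum>k\<in>I. c1 k * v k x)"
  define p2 where "p2 = (\<lambda>x. \<Sum>k\<in>I. c2 k * v k x)"
  define w where "w = (\<lambda>x. v j x - p2 x)"
  define r1 where "r1 = (\<lambda>x. \<psi> x - p1 x)"
  have r1I: "\<forall>i\<in>I. inner_L2 \<Omega> r1 (v i) = 0" using c1 unfolding r1_def p1_def .
  have wI: "\<forall>i\<in>I. inner_L2 \<Omega> w (v i) = 0" using c2 unfolding w_def p2_def .
  have vj: "v j = (\<lambda>x. w x + p2 x)" unfolding w_def by simp
  have orth_p2: "inner_L2 \<Omega> f p2 = 0" if "\<forall>i\<in>I. inner_L2 \<Omega> f (v i) = 0" for f
    unfolding p2_def inner_sum_right using that by simp
  show ?case
  proof (cases "inner_L2 \<Omega> w w = 0")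
    case True
    define c where "c = c1(j := 0)"
    have P: "(\<lambda>x. \<Sum>k\<in>insert j I. c k * v k x) = p1"
    proof (rule ext)
      fix x
      have "(\<Sum>k\<in>I. c k * v k x) = (\<Sum>k\<in>I. c1 k * v k x)"
        using insert.hyps(2) unfolding c_def by (intro sum.cong refl) auto
      then show "(\<Sum>k\<in>insert j I. c k * v k x) = p1 x"
        unfolding p1_def using insert.hyps by (simp add: c_def)
    qed
    have wz: "inner_L2 \<Omega> r1 w = 0" by (rule inner_zero_right) (rule inner_self_zero[OF fO True])
    have "inner_L2 \<Omega> r1 (v j) = 0" unfolding vj inner_add_right wz using orth_p2[OF r1I] by simp
    have P': "\<And>x. (\<Sum>k\<in>insert j I. c k * v k x) = p1 x" using fun_cong[OF P] by simp
    have eq: "(\<lambda>x. \<psi> x - (\<Sum>k\<in>insert j I. c k * v k x)) = r1"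
      unfolding r1_def by (simp only: P')
    show ?thesis
    proof (intro exI[of _ c] ballI)
      fix i assume i: "i \<in> insert j I"
      show "inner_L2 \<Omega> (\<lambda>x. \<psi> x - (\<Sum>k\<in>insert j I. c k * v k x)) (v i) = 0"
        unfolding eq using i r1I \<open>inner_L2 \<Omega> r1 (v j) = 0\<close> by blast
    qed
  next
    case False
    define \<beta> where "\<beta> = inner_L2 \<Omega> r1 w / inner_L2 \<Omega> w w"
    define c where "c = (\<lambda>k. c1 k - \<beta> * c2 k)(j := \<beta>)"
    have "(\<lambda>x. \<Sum>k\<in>insert j I. c k * v k x) = (\<lambda>x. \<beta> * v j x + (\<Sum>k\<in>I. (c1 k - \<beta> * c2 k) * v k x))"
    proof (rule ext)
      fix x
      have "(\<Sum>k\<in>I. c k * v k x) = (\<Sum>k\<in>I. (c1 k - \<beta> * c2 k) * v k x)"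
        using insert.hyps(2) unfolding c_def by (intro sum.cong refl) auto
      then show "(\<Sum>k\<in>insert j I. c k * v k x) = \<beta> * v j x + (\<Sum>k\<in>I. (c1 k - \<beta> * c2 k) * v k x)"
        using insert.hyps by (simp add: c_def)
    qed
    also have "\<dots> = (\<lambda>x. p1 x + \<beta> * w x)"
    proof (rule ext)
      fix x
      have "(\<Sum>k\<in>I. (c1 k - \<beta> * c2 k) * v k x) = p1 x - \<beta> * p2 x"
        unfolding p1_def p2_def by (simp add: left_diff_distrib sum_subtractf sum_distrib_left mult.assoc)
      then show "\<beta> * v j x + (\<Sum>k\<in>I. (c1 k - \<beta> * c2 k) * v k x) = p1 x + \<beta> * w x"
        unfolding w_def by (simp add: right_diff_distrib)
    qed
    finally have P: "(\<lambda>x. \<Sum>k\<in>insert j I. c k * v k x) = (\<lambda>x. p1 x + \<beta> * w x)" .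
    have R: "(\<lambda>x. \<psi> x - (p1 x + \<beta> * w x)) = (\<lambda>x. r1 x - \<beta> * w x)" unfolding r1_def by (simp add: algebra_simps)
    have oI: "\<forall>i\<in>I. inner_L2 \<Omega> (\<lambda>x. r1 x - \<beta> * w x) (v i) = 0"
      using r1I wI by (simp add: inner_diff_left inner_scal_left)
    have "inner_L2 \<Omega> (\<lambda>x. r1 x - \<beta> * w x) w = inner_L2 \<Omega> r1 w - \<beta> * inner_L2 \<Omega> w w"
      by (simp only: inner_diff_left inner_scal_left)
    also have "\<dots> = 0" using False unfolding \<beta>_def by simp
    finally have ow: "inner_L2 \<Omega> (\<lambda>x. r1 x - \<beta> * w x) w = 0" .
    have "inner_L2 \<Omega> (\<lambda>x. r1 x - \<beta> * w x) (v j) = 0"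
      unfolding vj inner_add_right ow using orth_p2[OF oI] by simp
    have P': "\<And>x. (\<Sum>k\<in>insert j I. c k * v k x) = p1 x + \<beta> * w x" using fun_cong[OF P] by simp
    have eq: "(\<lambda>x. \<psi> x - (\<Sum>k\<in>insert j I. c k * v k x)) = (\<lambda>x. r1 x - \<beta> * w x)"
      by (simp only: P' R)
    show ?thesis
    proof (intro exI[of _ c] ballI)
      fix i assume i: "i \<in> insert j I"
      show "inner_L2 \<Omega> (\<lambda>x. \<psi> x - (\<Sum>k\<in>insert j I. c k * v k x)) (v i) = 0"
        unfolding eq using i oI \<open>inner_L2 \<Omega> (\<lambda>x. r1 x - \<beta> * w x) (v j) = 0\<close> by blast
    qed
  qed
qed

lemma Tm_id: assumes "finite \<Omega>" "f \<in> L2r \<Omega> s" shows "Tm \<Omega> s s f = f"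
proof (rule ext)
  fix x
  show "Tm \<Omega> s s f x = f x"
  proof (cases "x \<subseteq> \<Omega> \<and> card x = s")
    case True
    then have fx: "finite x" using assms(1) finite_subset by blast
    have "{y. y \<subseteq> x \<and> card y = s} = {x}" using True fx card_subset_eq by auto
    then show ?thesis unfolding Tm_def using True by simp
  next
    case False
    then show ?thesis unfolding Tm_def if_not_P[OF False] using assms(2) unfolding L2r_def by auto
  qed
qed

lemma (in tab) harmonic_poly: assumes s1: "1 \<le> s" and y: "y \<subseteq> \<Omega>" "card y = s - 1"
  shows "(\<Sum>z\<in>\<Omega> - y. polytabloid s a b (insert z y)) = 0"
proof (cases "\<exists>i<s. a!i \<notin> y \<and> b!i \<notin> y")
  case True
  then obtain i where i: "i < s" "a!i \<notin> y" "b!i \<notin> y" by blast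
  have fy: "swc s a b {i} ` y = y" using swc1_fix[of i y] i by simp
  show ?thesis
  proof (rule sum_cancel[where h="swc s a b {i}"])
    show "finite (\<Omega> - y)" using fin by simp
    fix z assume z: "z \<in> \<Omega> - y"
    have "swc s a b {i} z \<notin> y"
    proof
      assume "swc s a b {i} z \<in> y"
      then have "z \<in> swc s a b {i} ` y" by (simp add: swc_mem)
      then show False using fy z by simp
    qed
    then show "swc s a b {i} z \<in> \<Omega> - y" using z swc_Omega by simp
    show "swc s a b {i} (swc s a b {i} z) = z" by (rule swc_invol)
    have "insert (swc s a b {i} z) y = swc s a b {i} ` (insert z y)" using fy by simp
    then show "polytabloid s a b (insert (swc s a b {i} z) y) = - polytabloid s a b (insert z y)"
      using poly_swc[of "{i}" "insert z y"] i by simp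
  qed
next
  case False
  have "polytabloid s a b (insert z y) = 0" if z: "z \<in> \<Omega> - y" for z
  proof -
    have "\<not> good s a b (insert z y)"
    proof
      assume g: "good s a b (insert z y)"
      have "good s a b y" unfolding good_def
      proof (intro conjI allI impI)
        show "y \<subseteq> E" using g unfolding good_def by auto
        fix i assume "i < s" then show "(a!i \<in> y) \<noteq> (b!i \<in> y)"
          using False g unfolding good_def by auto
      qed
      then have "card y = s" by (rule card_good)
      then show False using y s1 by simp
    qed
    then show ?thesis by (simp add: poly_eq)
  qed
  then show ?thesis by simp
qed

lemma harmonic_S: assumes fO: "finite \<Omega>" and s1: "1 \<le> s" and h: "h \<in> specht2 \<Omega> s"
  and y: "y \<subseteq> \<Omega>" "card y = s - 1"
  shows "(\<Sum>z\<in>\<Omega> - y. h (insert z y)) = 0"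
proof -
  obtain c where c: "h = (\<lambda>x. \<Sum>t\<in>tableaux2 \<Omega> s. c t * ptab s t x)"
    using h unfolding specht2_span spanI_def by blast
  have "(\<Sum>z\<in>\<Omega> - y. h (insert z y)) = (\<Sum>t\<in>tableaux2 \<Omega> s. c t * (\<Sum>z\<in>\<Omega> - y. ptab s t (insert z y)))"
    unfolding c by (simp add: sum_distrib_left sum.swap[of _ "\<Omega> - y"])
  also have "\<dots> = 0"
  proof (rule sum.neutral, rule ballI)
    fix t assume t: "t \<in> tableaux2 \<Omega> s"
    interpret tab \<Omega> s "fst t" "snd t" using tab_iff[OF fO] t by blast
    show "c t * (\<Sum>z\<in>\<Omega> - y. ptab s t (insert z y)) = 0"
      unfolding ptab_def using harmonic_poly[OF s1 y] by simp
  qed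
  finally show ?thesis .
qed

lemma falling_Suc: "falling a (Suc k) = falling a k * (a - of_nat k)"
  by (simp add: falling_def)

lemma falling_nz: assumes "k \<le> m" shows "falling (of_nat m) k \<noteq> 0"
proof -
  have "\<forall>i\<in>{..<k}. (of_nat m - of_nat i :: complex) \<noteq> 0"
  proof
    fix i assume "i \<in> {..<k}"
    then have "i \<noteq> m" using assms by simp
    then show "(of_nat m - of_nat i :: complex) \<noteq> 0" by (metis right_minus_eq of_nat_eq_iff)
  qed
  then show ?thesis unfolding falling_def by (metis prod_zero_iff finite_lessThan)
qed

lemma rec_alg: fixes A D x y :: complex assumes "D \<noteq> 0" "A * x + D * y = 0" shows "y = - A / D * x"
proof -
  have "D * y = - (A * x)" using assms(2) by (simp add: eq_neg_iff_add_eq_0 add.commute)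
  then show ?thesis using assms(1) by (simp add: field_simps)
qed

lemma step_alg: fixes F D X P l0 :: complex assumes "F \<noteq> 0" "D \<noteq> 0"
  shows "(- X / D) * ((-1)^k * P / F * l0) = (-1)^Suc k * (P * X) / (F * D) * l0"
  using assms by (simp add: field_simps)

lemma rec_step:
  fixes \<Omega> :: "'a set" and \<Lambda> :: "'a fn \<Rightarrow> 'a fn" and lam :: "nat \<Rightarrow> complex"
  assumes fin: "finite \<Omega>" and cn: "card \<Omega> = n" and s1: "1 \<le> s" and sr: "s \<le> r" and snr: "s \<le> n - r"
    and rn: "r \<le> n"
    and L: "is_Lambda \<Omega> s r s \<Lambda>" and K: "is_kernel \<Omega> r s \<Lambda> lam" and j: "j < s"
  shows "of_nat (r - s + 1 + j) * lam j + of_nat (n - r - j) * lam (Suc j) = 0"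
proof -
  interpret R: setting \<Omega> r s using fin sr snr rn cn by unfold_locales auto
  interpret SS: setting \<Omega> s s using fin sr snr rn cn by unfold_locales auto
  have LL: "\<forall>\<phi>\<in>L2 \<Omega>. \<forall>\<psi>\<in>L2 \<Omega>. \<Lambda> (\<lambda>x. \<phi> x + \<psi> x) = (\<lambda>x. \<Lambda> \<phi> x + \<Lambda> \<psi> x)"
    using L unfolding is_Lambda_def by (elim conjE)
  have Lim: "\<Lambda> ` L2comp \<Omega> r s \<subseteq> L2comp \<Omega> s s"
    using L unfolding is_Lambda_def by (elim conjE)
  have Lker: "\<forall>\<psi>\<in>L2 \<Omega>. (\<forall>\<phi>\<in>L2comp \<Omega> r s. inner_L2 \<Omega> \<psi> \<phi> = 0) \<longrightarrow> \<Lambda> \<psi> = (\<lambda>x. 0)"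
    using L unfolding is_Lambda_def by (elim conjE)
  have SS_eq: "L2comp \<Omega> s s = specht2 \<Omega> s"
  proof -
    have "Tm \<Omega> s s ` specht2 \<Omega> s = specht2 \<Omega> s"
    proof (rule image_cong[where g=id, THEN trans])
      show "\<And>x. x \<in> specht2 \<Omega> s \<Longrightarrow> Tm \<Omega> s s x = id x" using Tm_id[OF fin] S_L2r[OF fin] by auto
    qed simp_all
    then show ?thesis using SS.L2comp_eq by simp
  qed
  obtain x1 where x1: "x1 \<subseteq> \<Omega>" "card x1 = r" using obtain_subset_with_card_n rn cn by metis
  define \<delta> where "\<delta> = (\<lambda>x. if x = x1 then (1::complex) else 0)"
  have dL: "\<delta> \<in> L2 \<Omega>" unfolding \<delta>_def L2_def using x1 by auto
  define V where "V = (\<lambda>t. Tm \<Omega> r s (ptab s t))"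
  have comp: "L2comp \<Omega> r s = spanI (tableaux2 \<Omega> s) V"
    unfolding R.L2comp_eq specht2_span Tm_span V_def ..
  have VL: "V t \<in> L2 \<Omega>" for t unfolding V_def using Tm_L2r L2r_L2 by blast
  obtain c where c: "\<forall>t\<in>tableaux2 \<Omega> s. inner_L2 \<Omega> (\<lambda>x. \<delta> x - (\<Sum>k\<in>tableaux2 \<Omega> s. c k * V k x)) (V t) = 0"
    using proj_exists[OF fin finite_tableaux[OF fin]] by blast
  define p where "p = (\<lambda>x. \<Sum>k\<in>tableaux2 \<Omega> s. c k * V k x)"
  define q where "q = (\<lambda>x. \<delta> x - p x)"
  have pC: "p \<in> L2comp \<Omega> r s" unfolding comp p_def spanI_def by (rule CollectI, rule exI[of _ c], simp)
  have pL: "p \<in> L2 \<Omega>" unfolding p_def by (rule subspace_sum[OF subspace_L2 finite_tableaux[OF fin] VL])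
  have qL: "q \<in> L2 \<Omega>" unfolding q_def L2_def
  proof (intro CollectI allI impI)
    fix x assume "\<delta> x - p x \<noteq> 0"
    then have "\<delta> x \<noteq> 0 \<or> p x \<noteq> 0" by auto
    then show "x \<subseteq> \<Omega>" using dL pL unfolding L2_def by blast
  qed
  have qo: "\<forall>\<phi>\<in>L2comp \<Omega> r s. inner_L2 \<Omega> q \<phi> = 0"
  proof
    fix \<phi> assume "\<phi> \<in> L2comp \<Omega> r s"
    then obtain c' where "\<phi> = (\<lambda>x. \<Sum>t\<in>tableaux2 \<Omega> s. c' t * V t x)" unfolding comp spanI_def by blast
    then show "inner_L2 \<Omega> q \<phi> = 0" using c unfolding q_def p_def by (simp add: inner_sum_right)
  qed
  have Lq: "\<Lambda> q = (\<lambda>x. 0)" using Lker qL qo by blast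
  have "\<delta> = (\<lambda>x. p x + q x)" unfolding q_def by simp
  then have "\<Lambda> \<delta> = (\<lambda>x. \<Lambda> p x + \<Lambda> q x)" using LL pL qL by simp
  then have "\<Lambda> \<delta> = \<Lambda> p" using Lq by simp
  then have LdS: "\<Lambda> \<delta> \<in> specht2 \<Omega> s" using Lim pC SS_eq by blast
  have fX: "finite {x. x \<subseteq> \<Omega> \<and> card x = r}" using fin by simp
  have ker: "\<Lambda> \<delta> x2 = lam (card (x2 - x1))" if x2: "x2 \<subseteq> \<Omega>" "card x2 = s" for x2
  proof -
    have dr: "\<delta> \<in> L2r \<Omega> r" unfolding \<delta>_def L2r_def using x1 by auto
    have "\<Lambda> \<delta> x2 = (\<Sum>x\<in>{x. x \<subseteq> \<Omega> \<and> card x = r}. lam (card (x2 - x)) * \<delta> x)"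
      using K dr x2 unfolding is_kernel_def by blast
    also have "\<dots> = (\<Sum>x\<in>{x. x \<subseteq> \<Omega> \<and> card x = r}. if x = x1 then lam (card (x2 - x1)) else 0)"
      by (rule sum.cong) (auto simp: \<delta>_def)
    also have "\<dots> = lam (card (x2 - x1))" using fX x1 by simp
    finally show ?thesis .
  qed
  have fx1: "finite x1" using x1 fin finite_subset by blast
  have cO: "card (\<Omega> - x1) = n - r" using x1 fin cn by (simp add: card_Diff_subset fx1)
  have jle: "j \<le> card (\<Omega> - x1)" using cO j snr by simp
  obtain A where A: "A \<subseteq> \<Omega> - x1" "card A = j" using obtain_subset_with_card_n[OF jle] by blast
  have jle2: "s - 1 - j \<le> card x1" using x1 sr by simp
  obtain B where B: "B \<subseteq> x1" "card B = s - 1 - j" using obtain_subset_with_card_n[OF jle2] by blast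
  define y where "y = A \<union> B"
  have fA: "finite A" using A fin by (meson Diff_subset finite_subset subset_trans)
  have fB: "finite B" using B fx1 finite_subset by blast
  have AB: "A \<inter> B = {}" using A B by blast
  have cy: "card y = s - 1" unfolding y_def using card_Un_disjoint[OF fA fB AB] A B j by simp
  have yO: "y \<subseteq> \<Omega>" unfolding y_def using A B x1 by blast
  have fy: "finite y" unfolding y_def using fA fB by simp
  have harm: "(\<Sum>z\<in>\<Omega> - y. \<Lambda> \<delta> (insert z y)) = 0" by (rule harmonic_S[OF fin s1 LdS yO cy])
  have ins: "\<Lambda> \<delta> (insert z y) = lam (card (insert z y - x1))" if z: "z \<in> \<Omega> - y" for z
  proof (rule ker)
    show "insert z y \<subseteq> \<Omega>" using z yO by blast
    show "card (insert z y) = s" using z fy cy s1 by simp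
  qed
  have split: "\<Omega> - y = (x1 - B) \<union> (\<Omega> - x1 - A)" unfolding y_def using A B x1 by blast
  have disj: "(x1 - B) \<inter> (\<Omega> - x1 - A) = {}" by blast
  have s1': "\<And>z. z \<in> x1 - B \<Longrightarrow> lam (card (insert z y - x1)) = lam j"
  proof -
    fix z assume "z \<in> x1 - B"
    then have "insert z y - x1 = A" unfolding y_def using A B by blast
    then show "lam (card (insert z y - x1)) = lam j" using A by simp
  qed
  have s2': "\<And>z. z \<in> \<Omega> - x1 - A \<Longrightarrow> lam (card (insert z y - x1)) = lam (Suc j)"
  proof -
    fix z assume z: "z \<in> \<Omega> - x1 - A"
    then have "insert z y - x1 = insert z A" unfolding y_def using A B by blast
    then show "lam (card (insert z y - x1)) = lam (Suc j)" using A fA z by simp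
  qed
  have c1: "card (x1 - B) = r - (s - 1 - j)" using B x1 fB by (simp add: card_Diff_subset)
  have c2: "card (\<Omega> - x1 - A) = n - r - j" using A cO fA by (simp add: card_Diff_subset)
  have "(\<Sum>z\<in>\<Omega> - y. \<Lambda> \<delta> (insert z y)) = (\<Sum>z\<in>\<Omega> - y. lam (card (insert z y - x1)))"
    using ins by (rule sum.cong[OF refl])
  also have "\<dots> = (\<Sum>z\<in>x1 - B. lam (card (insert z y - x1))) + (\<Sum>z\<in>\<Omega> - x1 - A. lam (card (insert z y - x1)))"
    unfolding split using fin fx1 disj by (intro sum.union_disjoint) auto
  also have "\<dots> = (\<Sum>z\<in>x1 - B. lam j) + (\<Sum>z\<in>\<Omega> - x1 - A. lam (Suc j))"
    using s1' s2' by simp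
  also have "\<dots> = of_nat (r - (s - 1 - j)) * lam j + of_nat (n - r - j) * lam (Suc j)"
    using c1 c2 by simp
  finally have fin0: "of_nat (r - (s - 1 - j)) * lam j + of_nat (n - r - j) * lam (Suc j) = 0" using harm by simp
  have eqn: "r - (s - 1 - j) = r - s + 1 + j" using sr j by simp
  show ?thesis using fin0 unfolding eqn .
qed

theorem mainTheorem2:
  fixes \<Omega> :: "'a set" and n r s :: nat
    and \<Lambda> :: "'a fn \<Rightarrow> 'a fn" and lam :: "nat \<Rightarrow> complex"
  assumes "finite \<Omega>" and "card \<Omega> = n" and "n \<ge> 1"
    and "r \<le> n" and "s \<le> min r (n - r)"
    and "is_Lambda \<Omega> s r s \<Lambda>"
    and "is_kernel \<Omega> r s \<Lambda> lam"
  shows "\<forall>k\<le>s. lam k = (-1) ^ k * pochhammer (of_nat (r - s + 1)) k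
                      / falling (of_nat (n - r)) k * lam 0"
proof (cases "s = 0")
  case True
  then show ?thesis by (simp add: falling_def)
next
  case False
  then have s1: "1 \<le> s" by simp
  have sr: "s \<le> r" and snr: "s \<le> n - r" using assms(5) by auto
  have rec: "lam (Suc j) = - (of_nat (r - s + 1) + of_nat j) / (of_nat (n - r) - of_nat j) * lam j" if j: "j < s" for j
  proof -
    have e: "of_nat (r - s + 1 + j) * lam j + of_nat (n - r - j) * lam (Suc j) = 0"
      by (rule rec_step[OF assms(1,2) s1 sr snr assms(4,6,7) j])
    have nz: "(of_nat (n - r) - of_nat j :: complex) \<noteq> 0"
    proof -
      have "n - r - j > 0" using j snr by simp
      then have "(of_nat (n - r - j) :: complex) \<noteq> 0" by (metis gr_implies_not0 of_nat_eq_0_iff)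
      moreover have "(of_nat (n - r - j) :: complex) = of_nat (n - r) - of_nat j" using j snr by (simp add: of_nat_diff)
      ultimately show ?thesis by metis
    qed
    have dD: "of_nat (n - r - j) = (of_nat (n - r) - of_nat j :: complex)" using j snr by (simp add: of_nat_diff)
    have aA: "of_nat (r - s + 1 + j) = (of_nat (r - s + 1) + of_nat j :: complex)" by (simp only: of_nat_add)
    have e2: "(of_nat (r - s + 1) + of_nat j) * lam j + (of_nat (n - r) - of_nat j) * lam (Suc j) = 0"
      using e unfolding aA dD .
    show ?thesis using rec_alg[OF nz e2] .
  qed
  show ?thesis
  proof (intro allI impI)
    fix k assume "k \<le> s"
    then show "lam k = (-1) ^ k * pochhammer (of_nat (r - s + 1)) k / falling (of_nat (n - r)) k * lam 0"
    proof (induction k)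
      case 0 then show ?case by (simp add: falling_def)
    next
      case (Suc k)
      then have k: "k < s" by simp
      have F: "falling (of_nat (n - r)) k \<noteq> (0::complex)" by (rule falling_nz) (use k snr in simp)
      have nz: "(of_nat (n - r) - of_nat k :: complex) \<noteq> 0"
      proof -
        have "n - r - k > 0" using k snr by simp
        then have "(of_nat (n - r - k) :: complex) \<noteq> 0" by (metis gr_implies_not0 of_nat_eq_0_iff)
        moreover have "(of_nat (n - r - k) :: complex) = of_nat (n - r) - of_nat k" using k snr by (simp add: of_nat_diff)
        ultimately show ?thesis by metis
      qed
      have IH: "lam k = (-1) ^ k * pochhammer (of_nat (r - s + 1)) k / falling (of_nat (n - r)) k * lam 0"
        using Suc by simp
      show ?case unfolding rec[OF k] IH falling_Suc pochhammer_Suc by (rule step_alg[OF F nz])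
    qed
  qed
qed

end
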